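(* Let $K$ be a real quadratic field, let $n,f,m\in\mathbb{Z}_{\geq 1}$, and let $\mathcal{O}\supseteq\mathcal{O}'$ be the orders of $K$ with $\mathrm{cond}(\mathcal{O})=m$ and $\mathrm{cond}(\mathcal{O}')=nm$. Set $\mathfrak{f}=f\mathcal{O}$ and $\mathfrak{f}'=f\mathcal{O}'$. (i) For every $\mathfrak{a}\in I_{\mathcal{O}}(n\mathfrak{f})$, the lattice $\mathfrak{a}\cap\mathcal{O}'$ is $\mathcal{O}'$-invertible. Moreover the map $\Theta:I_{\mathcal{O}}(n\mathfrak{f})\to I_{\mathcal{O}'}(\mathfrak{f}')$, $\Theta(\mathfrak{a})=\mathfrak{a}\cap\mathcal{O}'$, is multiplicative: $\Theta(\mathfrak{a}\mathfrak{a}')=\Theta(\mathfrak{a})\Theta(\mathfrak{a}')$ for all $\mathfrak{a},\mathfrak{a}'\in I_{\mathcal{O}}(n\mathfrak{f})$. (ii) If $\mathfrak{a},\mathfrak{a}'\in I_{\mathcal{O}}(n\mathfrak{f})$ satisfy $\mathfrak{a}\sim_{nf}\mathfrak{a}'$, then $\Theta(\mathfrak{a})\sim_f\Theta(\mathfrak{a}')$; consequently $\Theta$ induces a well-defined surjective map $\widetilde{\Theta}:C_{\mathcal{O}}(n\mathfrak{f})\to C_{\mathcal{O}'}(\mathfrak{f}')$.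
   Context: For a positive integer $k$, $\mathcal{O}_k=\mathbb{Z}+k\omega\mathbb{Z}$ denotes the unique order of $K$ of conductor $k$, where $\mathcal{O}_K=\mathbb{Z}+\omega\mathbb{Z}$. A lattice is a free $\mathbb{Z}$-submodule of rank 2 of $K$; for a lattice $L$, $\mathrm{End}_K(L)=\{\lambda\in K:\lambda L\subseteq L\}$ and $L^{-1}=\{\lambda\in K:\lambda L\subseteq\mathrm{End}_K(L)\}$. An $\mathcal{O}$-ideal is a lattice stable under $\mathcal{O}$; it is invertible ($\mathcal{O}$-invertible) if its endomorphism ring equals $\mathcal{O}$. For an $\mathcal{O}$-ideal $\mathfrak{g}\subseteq\mathcal{O}$, $I_{\mathcal{O}}(\mathfrak{g})$ is the set of invertible $\mathcal{O}$-ideals $\mathfrak{b}\subseteq\mathcal{O}$ with $\mathfrak{b}+\mathfrak{g}=\mathcal{O}$. For lattices $L_1,L_2$ and a positive integer $g$, $L_1\sim_g L_2$ means there is a totally positive $\lambda\in L_1^{-1}g+1$ with $\lambda L_1=L_2$ (totally positive: $\lambda>0$ and its Galois conjugate $\lambda^\sigma>0$); for $\mathfrak{g}=g\mathcal{O}$ the relation $\sim_{\mathfrak{g}}$ on invertible $\mathcal{O}$-ideals is the same as $\sim_g$. The narrow extended class group is $C_{\mathcal{O}}(\mathfrak{g})=I_{\mathcal{O}}(\mathfrak{g})/\sim_{\mathfrak{g}}$. *)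

theory Defs
  imports Complex_Main "HOL-Computational_Algebra.Squarefree"
begin

definition qf_K :: "int \<Rightarrow> real set" where
  "qf_K d = {of_rat a + of_rat b * sqrt (of_int d) | a b. True}"

definition qf_conj :: "int \<Rightarrow> real \<Rightarrow> real" where
  "qf_conj d x = (THE y. \<exists>a b. x = of_rat a + of_rat b * sqrt (of_int d)
                               \<and> y = of_rat a - of_rat b * sqrt (of_int d))"

definition totally_positive :: "int \<Rightarrow> real \<Rightarrow> bool" where
  "totally_positive d x \<longleftrightarrow> x > 0 \<and> qf_conj d x > 0"

text \<open>omega with O_K = Z + omega Z.\<close>
definition qf_omega :: "int \<Rightarrow> real" where
  "qf_omega d = (if d mod 4 = 1 then (1 + sqrt (of_int d)) / 2 else sqrt (of_int d))"

text \<open>The order of conductor k: Z + k omega Z.\<close>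
definition qf_order :: "int \<Rightarrow> nat \<Rightarrow> real set" where
  "qf_order d k = {of_int a + of_int b * of_nat k * qf_omega d | a b. True}"

definition is_lattice :: "int \<Rightarrow> real set \<Rightarrow> bool" where
  "is_lattice d L \<longleftrightarrow> (\<exists>u v. u \<in> qf_K d \<and> v \<in> qf_K d
      \<and> (\<forall>a b :: int. of_int a * u + of_int b * v = 0 \<longrightarrow> a = 0 \<and> b = 0)
      \<and> L = {of_int a * u + of_int b * v | a b. True})"

definition lat_End :: "int \<Rightarrow> real set \<Rightarrow> real set" where
  "lat_End d L = {c \<in> qf_K d. \<forall>x\<in>L. c * x \<in> L}"

definition lat_inv :: "int \<Rightarrow> real set \<Rightarrow> real set" where
  "lat_inv d L = {c \<in> qf_K d. \<forall>x\<in>L. c * x \<in> lat_End d L}"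

definition is_ideal :: "int \<Rightarrow> real set \<Rightarrow> real set \<Rightarrow> bool" where
  "is_ideal d Ok L \<longleftrightarrow> is_lattice d L \<and> (\<forall>r\<in>Ok. \<forall>x\<in>L. r * x \<in> L)"

definition is_invertible_ideal :: "int \<Rightarrow> real set \<Rightarrow> real set \<Rightarrow> bool" where
  "is_invertible_ideal d Ok L \<longleftrightarrow> is_ideal d Ok L \<and> lat_End d L = Ok"

definition lat_sum :: "real set \<Rightarrow> real set \<Rightarrow> real set" where
  "lat_sum A B = {x + y | x y. x \<in> A \<and> y \<in> B}"

definition lat_mult :: "real set \<Rightarrow> real set \<Rightarrow> real set" where
  "lat_mult A B = {z. \<exists>(n::nat) xs ys. z = (\<Sum>i<n. xs i * ys i)
                         \<and> (\<forall>i<n. xs i \<in> A \<and> ys i \<in> B)}"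

definition lat_scale :: "real \<Rightarrow> real set \<Rightarrow> real set" where
  "lat_scale c L = (\<lambda>x. c * x) ` L"

definition I_ord :: "int \<Rightarrow> real set \<Rightarrow> real set \<Rightarrow> real set set" where
  "I_ord d Ok G = {B. is_invertible_ideal d Ok B \<and> B \<subseteq> Ok \<and> lat_sum B G = Ok}"

definition lat_equiv :: "int \<Rightarrow> nat \<Rightarrow> real set \<Rightarrow> real set \<Rightarrow> bool" where
  "lat_equiv d g L1 L2 \<longleftrightarrow> (\<exists>c. c \<in> {of_nat g * u + 1 | u. u \<in> lat_inv d L1}
       \<and> totally_positive d c \<and> lat_scale c L1 = L2)"

end

theory Submission
  imports Defs
begin


lemma sqrt_sqf_irrat:
  fixes d :: int assumes "d > 1" "squarefree d"
  shows "sqrt (of_int d) \<notin> \<rat>"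
proof
  assume "sqrt (of_int d) \<in> \<rat>"
  then obtain m n :: nat where n: "n \<noteq> 0" and sq: "\<bar>sqrt (of_int d)\<bar> = m / n" and cop: "coprime m n"
    by (rule Rats_abs_nat_div_natE)
  have "real m = sqrt (of_int d) * n" using n sq assms(1) by (simp add: field_simps)
  then have "real m ^ 2 = of_int d * real n ^ 2" using assms(1) by (simp add: power_mult_distrib)
  then have eq: "int m ^ 2 = d * int n ^ 2" by (metis of_int_eq_iff of_int_mult of_int_of_nat_eq of_int_power)
  have "int n dvd int m ^ 2" using eq by (simp add: power2_eq_square)
  moreover have "coprime (int n) (int m ^ 2)" using cop by (simp add: coprime_commute)
  ultimately have "is_unit (int n)" by (metis coprime_common_divisor dvd_refl)
  then have "n = 1" by simp
  then have "int m ^ 2 = d" using eq by simp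
  then have "int m ^ 2 dvd d" by simp
  then have "int m dvd 1" using assms(2) squarefreeD by blast
  then have "d = 1" using \<open>int m ^ 2 = d\<close> by auto
  then show False using assms by simp
qed


locale qf = fixes d :: int assumes d1: "d > 1" and sqf: "squarefree d"
begin

abbreviation sd where "sd \<equiv> sqrt (of_int d)"
definition om where "om = qf_omega d"
definition T :: int where "T = (if d mod 4 = 1 then 1 else 0)"
definition U :: int where "U = (if d mod 4 = 1 then (d-1) div 4 else d)"

lemma sd_sq: "sd * sd = of_int d" using d1 by simp

lemma sd_irrat: "sd \<notin> \<rat>" using sqrt_sqf_irrat d1 sqf by blast

lemma om_sq: "om * om = of_int T * om + of_int U"
proof (cases "d mod 4 = 1")
  case True
  then have "4 dvd d - 1" by presburger
  then have "of_int ((d-1) div 4) * 4 = (of_int d - 1 :: real)"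
    by (metis dvd_div_mult_self of_int_1 of_int_diff of_int_mult of_int_numeral)
  then show ?thesis using True sd_sq unfolding om_def qf_omega_def T_def U_def
    by (simp add: field_simps)
next
  case False
  then show ?thesis using sd_sq unfolding om_def qf_omega_def T_def U_def by simp
qed

lemma om_form: "\<exists>p q. p \<in> \<rat> \<and> q \<in> \<rat> \<and> q \<noteq> 0 \<and> om = p + q * sd"
  unfolding om_def qf_omega_def
  by (cases "d mod 4 = 1") (rule exI[of _ "1/2"], rule exI[of _ "1/2"], simp add: field_simps,
      rule exI[of _ 0], rule exI[of _ 1], simp)

lemma om_irrat: "om \<notin> \<rat>"
proof
  assume "om \<in> \<rat>"
  obtain p q where pq: "p \<in> \<rat>" "q \<in> \<rat>" "q \<noteq> 0" "om = p + q * sd" using om_form by blast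
  then have "sd = (om - p) / q" by simp
  also have "\<dots> \<in> \<rat>" using Rats_divide[OF Rats_diff[OF \<open>om \<in> \<rat>\<close> pq(1)] pq(2)] .
  finally show False using sd_irrat by simp
qed

lemma K_iff: "x \<in> qf_K d \<longleftrightarrow> (\<exists>p q. p \<in> \<rat> \<and> q \<in> \<rat> \<and> x = p + q * sd)"
proof
  assume "x \<in> qf_K d"
  then obtain a b where "x = of_rat a + of_rat b * sd" unfolding qf_K_def by blast
  then show "\<exists>p q. p \<in> \<rat> \<and> q \<in> \<rat> \<and> x = p + q * sd"
    by (intro exI[of _ "of_rat a"] exI[of _ "of_rat b"]) simp
next
  assume "\<exists>p q. p \<in> \<rat> \<and> q \<in> \<rat> \<and> x = p + q * sd"
  then obtain p q where "p \<in> \<rat>" "q \<in> \<rat>" "x = p + q * sd" by blast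
  moreover obtain a where "p = of_rat a" using \<open>p \<in> \<rat>\<close> Rats_cases by blast
  moreover obtain b where "q = of_rat b" using \<open>q \<in> \<rat>\<close> Rats_cases by blast
  ultimately show "x \<in> qf_K d" unfolding qf_K_def by blast
qed

lemma sd_unique:
  assumes "p \<in> \<rat>" "q \<in> \<rat>" "p' \<in> \<rat>" "q' \<in> \<rat>" "p + q * sd = p' + q' * sd"
  shows "p = p' \<and> q = q'"
proof (cases "q = q'")
  case True then show ?thesis using assms by simp
next
  case False
  then have "sd = (p - p') / (q' - q)" using assms(5) by (simp add: field_simps)
  also have "\<dots> \<in> \<rat>" using assms by simp
  finally show ?thesis using sd_irrat by simp
qed

lemma K_add: assumes "x \<in> qf_K d" "y \<in> qf_K d" shows "x + y \<in> qf_K d"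
proof -
  obtain p q where a: "p \<in> \<rat>" "q \<in> \<rat>" "x = p + q*sd" using assms(1) unfolding K_iff by blast
  obtain p' q' where b: "p' \<in> \<rat>" "q' \<in> \<rat>" "y = p' + q'*sd" using assms(2) unfolding K_iff by blast
  show ?thesis unfolding K_iff using a b by (intro exI[of _ "p+p'"] exI[of _ "q+q'"]) (simp add: algebra_simps)
qed

lemma K_minus: assumes "x \<in> qf_K d" shows "- x \<in> qf_K d"
proof -
  obtain p q where a: "p \<in> \<rat>" "q \<in> \<rat>" "x = p + q*sd" using assms(1) unfolding K_iff by blast
  show ?thesis unfolding K_iff using a by (intro exI[of _ "-p"] exI[of _ "-q"]) (simp add: algebra_simps)
qed

lemma K_diff: "x \<in> qf_K d \<Longrightarrow> y \<in> qf_K d \<Longrightarrow> x - y \<in> qf_K d"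
  using K_add K_minus by (metis diff_conv_add_uminus)

lemma K_mult: assumes "x \<in> qf_K d" "y \<in> qf_K d" shows "x * y \<in> qf_K d"
proof -
  obtain p q where a: "p \<in> \<rat>" "q \<in> \<rat>" "x = p + q*sd" using assms(1) unfolding K_iff by blast
  obtain p' q' where b: "p' \<in> \<rat>" "q' \<in> \<rat>" "y = p' + q'*sd" using assms(2) unfolding K_iff by blast
  have "x * y = p*p' + q*q'*(sd*sd) + (p*q'+q*p') * sd"
    unfolding a b by algebra
  also have "\<dots> = (p*p' + q*q'*of_int d) + (p*q'+q*p') * sd" by (simp only: sd_sq)
  finally show ?thesis unfolding K_iff using a b by (intro exI[of _ "p*p' + q*q'*of_int d"] exI[of _ "p*q'+q*p'"]) simp
qed

lemma K_zero[simp]: "0 \<in> qf_K d" using K_iff by (metis Rats_0 add_0 mult_zero_left)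

lemma pm_sd: "(p + q*sd) * (p - q*sd) = p*p - q*q*of_int d"
proof -
  have "(p + q*sd) * (p - q*sd) = p*p - q*q*(sd*sd)" by algebra
  then show ?thesis by (simp only: sd_sq)
qed

lemma K_rat: "x \<in> \<rat> \<Longrightarrow> x \<in> qf_K d"
  unfolding K_iff by (rule exI[of _ x], rule exI[of _ 0], simp)

lemma K_of_int[simp]: "of_int k \<in> qf_K d" by (rule K_rat) simp
lemma K_of_nat[simp]: "of_nat k \<in> qf_K d" by (rule K_rat) simp
lemma K_sd: "sd \<in> qf_K d"
  unfolding K_iff by (rule exI[of _ 0], rule exI[of _ 1], simp)
lemma K_om: "om \<in> qf_K d"
  using om_form K_add K_mult K_rat K_sd by metis

lemma norm_nz:
  assumes "p \<in> \<rat>" "q \<in> \<rat>" "p + q * sd \<noteq> 0"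
  shows "p*p - q*q*of_int d \<noteq> 0"
proof
  assume h: "p*p - q*q*of_int d = 0"
  then have "(p - q*sd) * (p + q*sd) = 0" using sd_sq by (simp add: algebra_simps)
  then have "p - q*sd = 0" using assms(3) by simp
  then have "p + (-q)*sd = 0 + 0 * sd" by simp
  then have "p = 0 \<and> -q = 0" using sd_unique[of p "-q" 0 0] assms by simp
  then show False using assms by simp
qed

lemma inv_formula:
  assumes "p \<in> \<rat>" "q \<in> \<rat>" "p + q*sd \<noteq> 0"
  shows "inverse (p + q*sd) = p/(p*p - q*q*of_int d) + (-q/(p*p - q*q*of_int d)) * sd"
proof -
  let ?D = "p*p - q*q*of_int d"
  have D: "?D \<noteq> 0" using norm_nz assms by blast
  have "(p + q*sd) * ((p - q*sd)/?D) = 1" using D pm_sd[of p q] by (simp add: mult.assoc[symmetric])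
  then have "inverse (p + q*sd) = (p - q*sd)/?D" by (rule inverse_unique)
  also have "\<dots> = p/?D + (-q/?D) * sd" by (simp add: diff_divide_distrib)
  finally show ?thesis .
qed

lemma K_inverse: assumes "x \<in> qf_K d" shows "inverse x \<in> qf_K d"
proof (cases "x = 0")
  case True then show ?thesis by simp
next
  case False
  from assms obtain p q where pq: "p \<in> \<rat>" "q \<in> \<rat>" "x = p + q*sd" unfolding K_iff by blast
  let ?D = "p*p - q*q*of_int d"
  have "inverse x = p/?D + (-q/?D) * sd" using inv_formula pq False by simp
  then show ?thesis unfolding K_iff using pq by (intro exI[of _ "p/?D"] exI[of _ "-q/?D"]) simp
qed

lemma K_divide: "x \<in> qf_K d \<Longrightarrow> y \<in> qf_K d \<Longrightarrow> x / y \<in> qf_K d"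
  using K_mult K_inverse by (simp add: divide_inverse)

lemma conj_eq: assumes "p \<in> \<rat>" "q \<in> \<rat>" shows "qf_conj d (p + q * sd) = p - q * sd"
  unfolding qf_conj_def
proof (rule the_equality)
  show "\<exists>a b. p + q * sd = of_rat a + of_rat b * sd \<and> p - q * sd = of_rat a - of_rat b * sd"
  proof -
    obtain a where "p = of_rat a" using \<open>p \<in> \<rat>\<close> Rats_cases by blast
    moreover obtain b where "q = of_rat b" using \<open>q \<in> \<rat>\<close> Rats_cases by blast
    ultimately show ?thesis by blast
  qed
next
  fix y assume "\<exists>a b. p + q * sd = of_rat a + of_rat b * sd \<and> y = of_rat a - of_rat b * sd"
  then obtain a b where "p + q * sd = of_rat a + of_rat b * sd" "y = of_rat a - of_rat b * sd" by blast
  then show "y = p - q * sd" using sd_unique[of p q "of_rat a" "of_rat b"] assms by simp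
qed

lemma conj_add_int: assumes "x \<in> qf_K d" shows "qf_conj d (x + of_int k) = qf_conj d x + of_int k"
proof -
  from assms obtain p q where pq: "p \<in> \<rat>" "q \<in> \<rat>" "x = p + q*sd" unfolding K_iff by blast
  have "x + of_int k = (p + of_int k) + q * sd" using pq by simp
  moreover have "qf_conj d ((p + of_int k) + q * sd) = (p + of_int k) - q * sd" by (rule conj_eq) (use pq in auto)
  ultimately have "qf_conj d (x + of_int k) = (p + of_int k) - q * sd" by (simp only:)
  moreover have "qf_conj d x = p - q * sd" using pq conj_eq by simp
  ultimately show ?thesis by simp
qed

lemma conj_inverse: assumes "x \<in> qf_K d" shows "qf_conj d (inverse x) = inverse (qf_conj d x)"
proof (cases "x = 0")
  case True
  then have "x = 0 + 0 * sd" by simp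
  then show ?thesis using True conj_eq[of 0 0] by simp
next
  case False
  from assms obtain p q where pq: "p \<in> \<rat>" "q \<in> \<rat>" "x = p + q*sd" unfolding K_iff by blast
  let ?D = "p*p - q*q*of_int d"
  have D: "?D \<noteq> 0" using norm_nz pq False by blast
  have "inverse x = p/?D + (-q/?D) * sd" using inv_formula pq False by simp
  then have "qf_conj d (inverse x) = p/?D - (-q/?D) * sd" using conj_eq[of "p/?D" "-q/?D"] pq by simp
  also have "\<dots> = (p + q*sd)/?D" by (simp add: add_divide_distrib)
  also have "\<dots> = inverse (p - q*sd)"
  proof -
    have "(p - q*sd) * ((p + q*sd)/?D) = 1" using D pm_sd[of p q] by (simp add: mult.commute)
    then show ?thesis by (rule inverse_unique[symmetric])
  qed
  finally show ?thesis using conj_eq pq by simp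
qed

end



lemma int_subgrp:
  fixes G :: "int set"
  assumes z: "0 \<in> G" and ad: "\<forall>x\<in>G. \<forall>y\<in>G. x+y\<in>G" and ng: "\<forall>x\<in>G. -x\<in>G" and g: "g\<in>G" "g\<noteq>0"
  shows "\<exists>c>0. \<forall>x. x\<in>G \<longleftrightarrow> c dvd x"
proof -
  have mult: "c * j \<in> G" if "c \<in> G" for c j
  proof (induction j rule: int_induct[where k=0])
    case base then show ?case using z by simp
  next
    case (step1 i) then show ?case using ad that by (simp add: distrib_left)
  next
    case (step2 i)
    have e: "c * (i - 1) = c * i + - c" by (simp add: algebra_simps)
    have "c * i + - c \<in> G" using ad ng that step2 by blast
    then show ?case unfolding e .
  qed
  have ag: "int (nat \<bar>g\<bar>) \<in> G" using g ng by (cases "g \<ge> 0") auto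
  define n where "n = (LEAST n::nat. n > 0 \<and> int n \<in> G)"
  have ex: "nat \<bar>g\<bar> > 0 \<and> int (nat \<bar>g\<bar>) \<in> G" using ag g by simp
  have n: "n > 0 \<and> int n \<in> G" unfolding n_def by (rule LeastI[of _ "nat \<bar>g\<bar>"]) (rule ex)
  have nmin: "\<And>m. m > 0 \<and> int m \<in> G \<Longrightarrow> n \<le> m" unfolding n_def by (rule Least_le)
  show ?thesis
  proof (intro exI[of _ "int n"] conjI allI iffI)
    show "int n > 0" using n by simp
  next
    fix x assume "x \<in> G"
    have "x mod int n = x + (- (int n * (x div int n)))" by (simp add: mod_div_mult_eq[symmetric] algebra_simps)
    moreover have "- (int n * (x div int n)) \<in> G" using mult n ng by blast
    moreover have "x + (- (int n * (x div int n))) \<in> G" using ad \<open>x \<in> G\<close> calculation(2) by blast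
    ultimately have xm: "x mod int n \<in> G" by simp
    have lt: "0 \<le> x mod int n" "x mod int n < int n" using n by auto
    have "x mod int n = 0"
    proof (rule ccontr)
      assume "x mod int n \<noteq> 0"
      then have "nat (x mod int n) > 0 \<and> int (nat (x mod int n)) \<in> G" using lt xm by simp
      then have "n \<le> nat (x mod int n)" by (rule nmin)
      then show False using lt by linarith
    qed
    then show "int n dvd x" by auto
  next
    fix x assume "int n dvd x"
    then obtain j where "x = int n * j" by auto
    then show "x \<in> G" using mult n by blast
  qed
qed

context qf begin

definition wk :: "nat \<Rightarrow> real" where "wk k = of_nat k * om"

lemma ord_iff: "z \<in> qf_order d k \<longleftrightarrow> (\<exists>a b. z = of_int a + of_int b * wk k)"
  unfolding qf_order_def wk_def om_def by (simp add: mult.assoc)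

lemma ordI: "of_int a + of_int b * wk k \<in> qf_order d k" unfolding ord_iff by blast

lemma w_sq: "wk k * wk k = of_int (int k * T) * wk k + of_int (int k ^ 2 * U)"
proof -
  have "wk k * wk k = of_nat k ^ 2 * (om * om)" unfolding wk_def by (simp add: power2_eq_square)
  also have "\<dots> = of_int (int k * T) * wk k + of_int (int k ^ 2 * U)"
    unfolding om_sq wk_def by (simp add: algebra_simps power2_eq_square)
  finally show ?thesis .
qed

lemma coord_unique:
  assumes "k > 0" "of_int a + of_int b * wk k = of_int a' + of_int b' * wk k"
  shows "a = a' \<and> b = b'"
proof (cases "b = b'")
  case True then show ?thesis using assms by simp
next
  case False
  then have "om = (of_int a' - of_int a) / (of_int (b - b') * of_nat k)"
    using assms unfolding wk_def by (simp add: field_simps)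
  also have "\<dots> \<in> \<rat>" by simp
  finally show ?thesis using om_irrat by simp
qed

lemma wk_in: "wk k \<in> qf_order d k" using ordI[of 0 1 k] by simp
lemma ord_int[simp]: "of_int j \<in> qf_order d k" using ordI[of j 0 k] by simp
lemma ord_nat[simp]: "of_nat j \<in> qf_order d k" using ord_int[of "int j"] by simp
lemma ord_0[simp]: "0 \<in> qf_order d k" using ord_int[of 0] by simp
lemma ord_1[simp]: "1 \<in> qf_order d k" using ord_int[of 1] by simp

lemma ord_add: assumes "x \<in> qf_order d k" "y \<in> qf_order d k" shows "x + y \<in> qf_order d k"
proof -
  obtain a b where x: "x = of_int a + of_int b * wk k" using assms(1) ord_iff by blast
  obtain a' b' where y: "y = of_int a' + of_int b' * wk k" using assms(2) ord_iff by blast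
  have "x + y = of_int (a+a') + of_int (b+b') * wk k" unfolding x y by (simp add: algebra_simps)
  then show ?thesis by (simp only: ordI)
qed

lemma ord_minus: assumes "x \<in> qf_order d k" shows "- x \<in> qf_order d k"
proof -
  obtain a b where x: "x = of_int a + of_int b * wk k" using assms(1) ord_iff by blast
  have "- x = of_int (-a) + of_int (-b) * wk k" unfolding x by (simp add: algebra_simps)
  then show ?thesis by (simp only: ordI)
qed

lemma ord_diff: "x \<in> qf_order d k \<Longrightarrow> y \<in> qf_order d k \<Longrightarrow> x - y \<in> qf_order d k"
  using ord_add ord_minus by (metis diff_conv_add_uminus)

lemma ord_mult: assumes "x \<in> qf_order d k" "y \<in> qf_order d k" shows "x * y \<in> qf_order d k"
proof -
  obtain a b where x: "x = of_int a + of_int b * wk k" using assms(1) ord_iff by blast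
  obtain a' b' where y: "y = of_int a' + of_int b' * wk k" using assms(2) ord_iff by blast
  have "x * y = of_int (a*a') + of_int (a*b' + b*a') * wk k + of_int (b*b') * (wk k * wk k)"
    unfolding x y by (simp add: algebra_simps)
  also have "\<dots> = of_int (a*a' + b*b'*(int k ^ 2 * U)) + of_int (a*b' + b*a' + b*b'*(int k * T)) * wk k"
    unfolding w_sq by (simp add: algebra_simps)
  finally show ?thesis by (simp only: ordI)
qed

lemma ord_K: "x \<in> qf_order d k \<Longrightarrow> x \<in> qf_K d"
proof -
  assume "x \<in> qf_order d k"
  then obtain a b where x: "x = of_int a + of_int b * (of_nat k * om)" using ord_iff wk_def by auto
  show ?thesis unfolding x by (intro K_add K_mult K_of_int K_of_nat K_om)
qed

lemma ord_mono: "qf_order d (n*m) \<subseteq> qf_order d m"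
proof
  fix x assume "x \<in> qf_order d (n*m)"
  then obtain a b where "x = of_int a + of_int b * wk (n*m)" using ord_iff by blast
  then have "x = of_int a + of_int (b * int n) * wk m" unfolding wk_def by (simp add: algebra_simps)
  then show "x \<in> qf_order d m" by (simp only: ordI)
qed

lemma ord_scale: assumes "x \<in> qf_order d m" shows "of_nat n * x \<in> qf_order d (n*m)"
proof -
  obtain a b where "x = of_int a + of_int b * wk m" using assms ord_iff by blast
  then have "of_nat n * x = of_int (int n * a) + of_int b * wk (n*m)" unfolding wk_def by (simp add: algebra_simps)
  then show ?thesis by (simp only: ordI)
qed

lemma ord_scale_int: assumes "x \<in> qf_order d m" "int n dvd j" shows "of_int j * x \<in> qf_order d (n*m)"
proof -
  obtain i where "j = int n * i" using assms(2) by auto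
  then have "of_int j * x = of_int i * (of_nat n * x)" by simp
  then show ?thesis using ord_scale[OF assms(1)] ord_mult ord_int by metis
qed

lemma norm_elem:
  assumes "k > 0" "z \<in> qf_order d k" "z \<noteq> 0"
  shows "\<exists>zb N. zb \<in> qf_order d k \<and> N \<noteq> 0 \<and> z * zb = of_int N"
proof -
  obtain x y where z: "z = of_int x + of_int y * wk k" using assms ord_iff by blast
  define zb where "zb = of_int (x + y * (int k * T)) + of_int (-y) * wk k"
  have "z * zb = of_int (x*x + x*y*(int k*T)) - of_int (y*y) * (wk k * wk k) + of_int (y*y*(int k*T)) * wk k"
    unfolding z zb_def by (simp add: algebra_simps)
  also have "\<dots> = of_int (x*x + x*y*(int k*T) - y*y*(int k ^ 2 * U))"
    unfolding w_sq by (simp add: algebra_simps)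
  finally have e: "z * zb = of_int (x*x + x*y*(int k*T) - y*y*(int k ^ 2 * U))" .
  have "zb \<noteq> 0"
  proof
    assume "zb = 0"
    then have "of_int (x + y * (int k * T)) + of_int (-y) * wk k = of_int 0 + of_int 0 * wk k" unfolding zb_def by simp
    then have "y = 0 \<and> x = 0" using coord_unique[OF assms(1)] by fastforce
    then show False using z assms by simp
  qed
  then have "x*x + x*y*(int k*T) - y*y*(int k ^ 2 * U) \<noteq> 0" using e assms by (metis mult_eq_0_iff of_int_0)
  then show ?thesis using e ordI zb_def by blast
qed

definition subgrp :: "real set \<Rightarrow> bool" where
  "subgrp S \<longleftrightarrow> 0 \<in> S \<and> (\<forall>x\<in>S. \<forall>y\<in>S. x+y \<in> S) \<and> (\<forall>x\<in>S. -x \<in> S)"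
definition stab :: "nat \<Rightarrow> real set \<Rightarrow> bool" where
  "stab k S \<longleftrightarrow> (\<forall>r\<in>qf_order d k. \<forall>x\<in>S. r*x \<in> S)"

lemma subgrp_diff: "subgrp S \<Longrightarrow> x \<in> S \<Longrightarrow> y \<in> S \<Longrightarrow> x - y \<in> S"
  unfolding subgrp_def by (metis diff_conv_add_uminus)

lemma hnf:
  assumes k: "k > 0" and sub: "S \<subseteq> qf_order d k" and sg: "subgrp S" and st: "stab k S"
    and z: "z \<in> S" "z \<noteq> 0"
  shows "\<exists>C a r. C > 0 \<and> a > 0 \<and> a dvd (r*r + r*(int k*T) - int k^2*U)
     \<and> S = {of_int i * of_int (C*a) + of_int j * (of_int C * (of_int r + wk k)) | i j. True}"
proof -
  define w where "w = wk k"
  define t where "t = int k * T"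
  define u where "u = int k^2 * U"
  have wsq: "w * w = of_int t * w + of_int u" unfolding w_def t_def u_def by (rule w_sq)
  have win: "w \<in> qf_order d k" unfolding w_def by (rule wk_in)
  have s0: "0 \<in> S" and sadd: "\<And>x y. x \<in> S \<Longrightarrow> y \<in> S \<Longrightarrow> x + y \<in> S"
    and sneg: "\<And>x. x \<in> S \<Longrightarrow> -x \<in> S" using sg unfolding subgrp_def by auto
  have smul: "\<And>r x. r \<in> qf_order d k \<Longrightarrow> x \<in> S \<Longrightarrow> r * x \<in> S" using st unfolding stab_def by auto
  define X where "X = {x::int. of_int x \<in> S}"
  define Y where "Y = {y::int. \<exists>x::int. of_int x + of_int y * w \<in> S}"
  obtain zb N where zb: "zb \<in> qf_order d k" "N \<noteq> 0" "z * zb = of_int N"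
    using norm_elem[OF k _ z(2)] z(1) sub w_def by blast
  have "of_int N \<in> S" using smul[OF zb(1) z(1)] zb(3) by (simp add: mult.commute)
  then have NX: "N \<in> X" unfolding X_def by simp
  have "\<exists>A>0. \<forall>x. x\<in>X \<longleftrightarrow> A dvd x"
  proof (rule int_subgrp[OF _ _ _ NX zb(2)])
    show "0 \<in> X" using s0 unfolding X_def by simp
    show "\<forall>x\<in>X. \<forall>y\<in>X. x + y \<in> X" unfolding X_def using sadd by simp
    show "\<forall>x\<in>X. - x \<in> X" unfolding X_def using sneg by simp
  qed
  then obtain A where A: "A > 0" "\<And>x. x\<in>X \<longleftrightarrow> A dvd x" by blast
  obtain x0 y0 where z0: "z = of_int x0 + of_int y0 * w" using z sub ord_iff w_def by blast
  have "\<exists>y\<in>Y. y \<noteq> 0"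
  proof (cases "y0 = 0")
    case False then show ?thesis using z0 z unfolding Y_def by blast
  next
    case True
    then have "x0 \<noteq> 0" using z0 z by simp
    moreover have "w * z = of_int 0 + of_int x0 * w" using z0 True by simp
    moreover have "w * z \<in> S" using smul[OF win z(1)] .
    ultimately show ?thesis unfolding Y_def by (metis (mono_tags, lifting) mem_Collect_eq)
  qed
  then obtain y1 where y1: "y1 \<in> Y" "y1 \<noteq> 0" by blast
  have "\<exists>C>0. \<forall>x. x\<in>Y \<longleftrightarrow> C dvd x"
  proof (rule int_subgrp[OF _ _ _ y1])
    show "0 \<in> Y" using s0 unfolding Y_def by (intro CollectI exI[of _ 0]) simp
    show "\<forall>x\<in>Y. \<forall>y\<in>Y. x + y \<in> Y"
    proof (intro ballI)
      fix y y' assume "y \<in> Y" "y' \<in> Y"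
      then obtain x x' where "of_int x + of_int y * w \<in> S" "of_int x' + of_int y' * w \<in> S" unfolding Y_def by blast
      then have "(of_int x + of_int y * w) + (of_int x' + of_int y' * w) \<in> S" by (rule sadd)
      moreover have "(of_int x + of_int y * w) + (of_int x' + of_int y' * w) = of_int (x+x') + of_int (y+y') * w"
        by (simp add: algebra_simps)
      ultimately show "y + y' \<in> Y" unfolding Y_def by (intro CollectI exI[of _ "x+x'"]) simp
    qed
    show "\<forall>x\<in>Y. - x \<in> Y"
    proof
      fix y assume "y \<in> Y"
      then obtain x where "of_int x + of_int y * w \<in> S" unfolding Y_def by blast
      then have "- (of_int x + of_int y * w) \<in> S" by (rule sneg)
      moreover have "- (of_int x + of_int y * w) = of_int (-x) + of_int (-y) * w" by simp
      ultimately show "- y \<in> Y" unfolding Y_def by (intro CollectI exI[of _ "-x"]) simp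
    qed
  qed
  then obtain C where C: "C > 0" "\<And>x. x\<in>Y \<longleftrightarrow> C dvd x" by blast
  have "C \<in> Y" using C by simp
  then obtain B where B: "of_int B + of_int C * w \<in> S" unfolding Y_def by blast
  have AS: "of_int A \<in> S" using A X_def by simp
  have "w * of_int A \<in> S" using smul[OF win AS] .
  moreover have "w * of_int A = of_int 0 + of_int A * w" by simp
  ultimately have "A \<in> Y" unfolding Y_def by (metis (mono_tags, lifting) mem_Collect_eq)
  then have CA: "C dvd A" using C by simp
  have wB: "w * (of_int B + of_int C * w) \<in> S" using smul[OF win B] .
  have wB_eq: "w * (of_int B + of_int C * w) = of_int (C*u) + of_int (B + C*t) * w"
  proof -
    have "w * (of_int B + of_int C * w) = of_int B * w + of_int C * (w * w)" by (simp add: algebra_simps)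
    also have "\<dots> = of_int (C*u) + of_int (B + C*t) * w" unfolding wsq by (simp add: algebra_simps)
    finally show ?thesis .
  qed
  have "B + C*t \<in> Y" using wB wB_eq unfolding Y_def by (metis (mono_tags, lifting) mem_Collect_eq)
  then have "C dvd B + C*t" using C by simp
  then have CB: "C dvd B" by (simp add: dvd_add_left_iff)
  obtain a where a: "A = C*a" using CA by blast
  obtain r where r: "B = C*r" using CB by blast
  have apos: "a > 0" using a A C by (simp add: zero_less_mult_iff)
  have rt_in: "of_int (r+t) * (of_int B + of_int C * w) \<in> S" using smul[OF ord_int B] .
  have "w * (of_int B + of_int C * w) - of_int (r+t) * (of_int B + of_int C * w) \<in> S"
    using subgrp_diff[OF sg wB rt_in] .
  moreover have "w * (of_int B + of_int C * w) - of_int (r+t) * (of_int B + of_int C * w) = of_int (C*u - (r+t)*B)"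
    unfolding wB_eq unfolding r by (simp add: algebra_simps)
  ultimately have "C*u - (r+t)*B \<in> X" unfolding X_def by simp
  then have "C*a dvd C*(u - (r+t)*r)" using A a r by (simp add: algebra_simps)
  then have "a dvd u - (r+t)*r" using C by simp
  then have adv: "a dvd r*r + r*t - u" by (metis dvd_minus_iff minus_diff_eq mult.commute distrib_left add.commute diff_add_eq_diff_diff_swap diff_diff_eq ring_class.ring_distribs(1))
  let ?L = "{of_int i * of_int (C*a) + of_int j * (of_int C * (of_int r + wk k)) | i j. True} :: real set"
  have "S = ?L"
  proof
    show "S \<subseteq> ?L"
    proof
      fix s assume sS: "s \<in> S"
      then obtain x' y' where s: "s = of_int x' + of_int y' * w" using sub ord_iff w_def by blast
      then have "y' \<in> Y" using sS unfolding Y_def by blast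
      then obtain j where j: "y' = C*j" using C by (meson dvdE)
      have jB: "of_int j * (of_int B + of_int C * w) \<in> S" using smul[OF ord_int B] .
      have "s - of_int j * (of_int B + of_int C * w) \<in> S" using subgrp_diff[OF sg sS jB] .
      moreover have "s - of_int j * (of_int B + of_int C * w) = of_int (x' - j*B)" unfolding s j
        by (simp add: algebra_simps)
      ultimately have "x' - j*B \<in> X" unfolding X_def by simp
      then obtain i where i: "x' - j*B = A*i" using A by (meson dvdE)
      have "s = of_int i * of_int (C*a) + of_int j * (of_int C * (of_int r + wk k))"
      proof -
        have "x' = A*i + j*B" using i by simp
        then show ?thesis unfolding s j w_def a r by (simp add: algebra_simps)
      qed
      then show "s \<in> ?L" by blast
    qed
  next
    show "?L \<subseteq> S"
    proof
      fix s assume "s \<in> ?L"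
      then obtain i j where s: "s = of_int i * of_int (C*a) + of_int j * (of_int C * (of_int r + wk k))" by blast
      have "of_int i * of_int A \<in> S" using smul[OF ord_int AS] .
      moreover have "of_int j * (of_int B + of_int C * w) \<in> S" using smul[OF ord_int B] .
      ultimately have "of_int i * of_int A + of_int j * (of_int B + of_int C * w) \<in> S" by (rule sadd)
      moreover have "of_int i * of_int A + of_int j * (of_int B + of_int C * w) = s"
        unfolding s a r w_def by (simp add: algebra_simps)
      ultimately show "s \<in> S" by simp
    qed
  qed
  then show ?thesis using C(1) apos adv unfolding t_def u_def by blast
qed

lemma hnf_lattice:
  assumes "k > 0" "C > 0" "a > 0"
  shows "is_lattice d {of_int i * of_int (C*a) + of_int j * (of_int C * (of_int r + wk k)) | i j. True}"
  unfolding is_lattice_def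
proof (intro exI conjI)
  show "of_int (C*a) \<in> qf_K d" by (rule K_of_int)
  show "of_int C * (of_int r + wk k) \<in> qf_K d" using ord_K[OF ordI[of r 1 k]] K_mult K_of_int by simp
  show "\<forall>i j::int. of_int i * of_int (C*a) + of_int j * (of_int C * (of_int r + wk k)) = 0 \<longrightarrow> i = 0 \<and> j = 0"
  proof (intro allI impI)
    fix i j :: int assume h: "of_int i * of_int (C*a) + of_int j * (of_int C * (of_int r + wk k)) = (0::real)"
    then have "of_int (i*C*a + j*C*r) + of_int (j*C) * wk k = of_int 0 + of_int 0 * wk k"
      by (simp add: algebra_simps)
    then have "i*C*a + j*C*r = 0 \<and> j*C = 0" using coord_unique[OF assms(1)] by blast
    then show "i = 0 \<and> j = 0" using assms by auto
  qed
qed auto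

lemma lattice_subgrp: assumes "is_lattice d L" shows "subgrp L" "L \<subseteq> qf_K d" "\<exists>z\<in>L. z \<noteq> 0"
proof -
  obtain u v where uv: "u \<in> qf_K d" "v \<in> qf_K d" "\<forall>a b :: int. of_int a * u + of_int b * v = 0 \<longrightarrow> a = 0 \<and> b = 0"
    "L = {of_int a * u + of_int b * v | a b. True}" using assms unfolding is_lattice_def by blast
  show "subgrp L" unfolding subgrp_def uv(4)
  proof (intro conjI ballI)
    show "0 \<in> {of_int a * u + of_int b * v | a b. True}" by (intro CollectI exI[of _ 0]) simp
  next
    fix x y assume "x \<in> {of_int a * u + of_int b * v | a b. True}" "y \<in> {of_int a * u + of_int b * v | a b. True}"
    then obtain a b a' b' where "x = of_int a * u + of_int b * v" "y = of_int a' * u + of_int b' * v" by blast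
    then have "x + y = of_int (a+a') * u + of_int (b+b') * v" by (simp add: algebra_simps)
    then show "x + y \<in> {of_int a * u + of_int b * v | a b. True}" by blast
  next
    fix x assume "x \<in> {of_int a * u + of_int b * v | a b. True}"
    then obtain a b where "x = of_int a * u + of_int b * v" by blast
    then have "-x = of_int (-a) * u + of_int (-b) * v" by (simp add: algebra_simps)
    then show "-x \<in> {of_int a * u + of_int b * v | a b. True}" by blast
  qed
  show "L \<subseteq> qf_K d" unfolding uv(4) using uv(1,2) K_add K_mult K_of_int by auto
  have "u \<noteq> 0" using uv(3)[rule_format, of 1 0] by auto
  moreover have "u \<in> L" unfolding uv(4) by (intro CollectI exI[of _ 1] exI[of _ 0]) simp
  ultimately show "\<exists>z\<in>L. z \<noteq> 0" by blast
qed

lemma rw_identity: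
  "(of_int r + of_int (int k * T) - wk k) * (of_int r + wk k) = of_int (r*r + r*(int k*T) - int k^2*U)"
proof -
  have "(of_int r + of_int (int k * T) - wk k) * (of_int r + wk k)
     = of_int (r*r) + of_int (r*(int k*T)) + of_int (int k * T) * wk k - wk k * wk k"
    by (simp add: algebra_simps)
  also have "\<dots> = of_int (r*r + r*(int k*T) - int k^2*U)" unfolding w_sq by simp
  finally show ?thesis .
qed

lemma hnf_primitive:
  assumes k: "k > 0" and C: "C > 0" and a: "a > 0" and ac: "a * c = r*r + r*(int k*T) - int k^2*U"
    and S: "S = {of_int i * of_int (C*a) + of_int j * (of_int C * (of_int r + wk k)) | i j. True}"
    and E: "lat_End d S = qf_order d k"
    and p: "prime p" "p dvd a" "p dvd 2*r + int k * T" "p dvd c"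
  shows False
proof -
  define w where "w = wk k"
  define t where "t = int k * T"
  obtain a' where a': "a = p * a'" using p by blast
  obtain b' where b': "2*r + t = p * b'" using p t_def by blast
  obtain c' where c': "c = p * c'" using p by blast
  have p0: "p \<noteq> 0" using p by auto
  define g where "g = (of_int r + w) / of_int p"
  have gK: "g \<in> qf_K d" unfolding g_def w_def using ord_K[OF ordI[of r 1 k]] by (simp add: K_divide)
  have sq: "(of_int r + w) * (of_int r + w) = of_int (2*r + t) * (of_int r + w) - of_int (a*c)"
  proof -
    have "(of_int r + of_int t - w) * (of_int r + w) = of_int (a*c)" unfolding w_def t_def ac by (rule rw_identity)
    then show ?thesis by (simp add: algebra_simps)
  qed
  have "g \<in> lat_End d S" unfolding lat_End_def
  proof (intro CollectI conjI ballI)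
    show "g \<in> qf_K d" by (rule gK)
  next
    fix s assume "s \<in> S"
    then obtain i j where s: "s = of_int i * of_int (C*a) + of_int j * (of_int C * (of_int r + w))"
      using S w_def by blast
    have "of_int p * (g * s) = of_int p * (of_int (-j*c') * of_int (C*a) + of_int (i*a' + j*b') * (of_int C * (of_int r + w)))"
    proof -
      have "of_int p * (g * s) = (of_int r + w) * s" unfolding g_def using p0 by simp
      also have "\<dots> = of_int i * of_int C * of_int a * (of_int r + w) + of_int j * of_int C * ((of_int r + w) * (of_int r + w))"
        unfolding s by (simp add: algebra_simps)
      also have "\<dots> = of_int p * (of_int (-j*c') * of_int (C*a) + of_int (i*a' + j*b') * (of_int C * (of_int r + w)))"
        unfolding sq b' c' a' by (simp add: algebra_simps)
      finally show ?thesis .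
    qed
    then have "g * s = of_int (-j*c') * of_int (C*a) + of_int (i*a' + j*b') * (of_int C * (of_int r + w))"
      using p0 by simp
    then show "g * s \<in> S" unfolding S w_def by blast
  qed
  then have "g \<in> qf_order d k" using E by simp
  then obtain x y where "g = of_int x + of_int y * wk k" using ord_iff by blast
  then have "of_int r + w = of_int p * (of_int x + of_int y * wk k)" unfolding g_def using p0 by (simp add: field_simps)
  then have "of_int r + of_int 1 * wk k = of_int (p*x) + of_int (p*y) * wk k" unfolding w_def by (simp add: algebra_simps)
  then have "1 = p*y" using coord_unique[OF k] by blast
  then have "p dvd 1" by (metis dvdI)
  then show False using p(1) not_prime_unit by blast
qed

end



lemma coprime_by_primes:
  fixes Q N :: int
  assumes "N \<noteq> 0" "\<And>p. prime p \<Longrightarrow> p dvd N \<Longrightarrow> \<not> p dvd Q"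
  shows "coprime Q N"
proof (rule ccontr)
  assume nc: "\<not> coprime Q N"
  have "gcd Q N \<noteq> 0" using assms(1) by simp
  moreover have "\<not> is_unit (gcd Q N)" using nc by (simp add: coprime_iff_gcd_eq_1)
  ultimately obtain p where "p dvd gcd Q N" "prime p" using prime_divisor_exists by blast
  then show False using assms(2) by auto
qed

lemma form_coprime:
  fixes A B Cc N :: int
  assumes prim: "\<And>p. prime p \<Longrightarrow> p dvd A \<Longrightarrow> p dvd B \<Longrightarrow> p dvd Cc \<Longrightarrow> False" and N: "N \<noteq> 0"
  shows "\<exists>x y. coprime (A*x*x + B*x*y + Cc*y*y) N"
proof -
  define P where "P = prime_factors N"
  have fin: "finite P" unfolding P_def by simp
  define Sx where "Sx = {p\<in>P. p dvd A \<and> \<not> p dvd Cc}"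
  define Sy where "Sy = {p\<in>P. \<not> p dvd A}"
  define x where "x = (\<Prod>p\<in>Sx. p)"
  define y where "y = (\<Prod>p\<in>Sy. p)"
  have finx: "finite Sx" "finite Sy" using fin unfolding Sx_def Sy_def by auto
  have Ppr: "\<And>p. p \<in> P \<Longrightarrow> prime p" unfolding P_def by (simp add: in_prime_factors_iff)
  have dx: "\<And>q. prime q \<Longrightarrow> q dvd x \<longleftrightarrow> q \<in> Sx"
  proof -
    fix q :: int assume q: "prime q"
    have "q dvd x \<longleftrightarrow> (\<exists>p\<in>Sx. q dvd p)" unfolding x_def using prime_dvd_prod_iff[OF finx(1) q] by simp
    also have "\<dots> \<longleftrightarrow> q \<in> Sx"
    proof
      assume "\<exists>p\<in>Sx. q dvd p"
      then obtain p where "p \<in> Sx" "q dvd p" by blast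
      moreover have "prime p" using \<open>p \<in> Sx\<close> Ppr unfolding Sx_def by simp
      ultimately show "q \<in> Sx" using primes_dvd_imp_eq[OF q] by metis
    qed (use dvd_refl in blast)
    finally show "q dvd x \<longleftrightarrow> q \<in> Sx" .
  qed
  have dy: "\<And>q. prime q \<Longrightarrow> q dvd y \<longleftrightarrow> q \<in> Sy"
  proof -
    fix q :: int assume q: "prime q"
    have "q dvd y \<longleftrightarrow> (\<exists>p\<in>Sy. q dvd p)" unfolding y_def using prime_dvd_prod_iff[OF finx(2) q] by simp
    also have "\<dots> \<longleftrightarrow> q \<in> Sy"
    proof
      assume "\<exists>p\<in>Sy. q dvd p"
      then obtain p where "p \<in> Sy" "q dvd p" by blast
      moreover have "prime p" using \<open>p \<in> Sy\<close> Ppr unfolding Sy_def by simp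
      ultimately show "q \<in> Sy" using primes_dvd_imp_eq[OF q] by metis
    qed (use dvd_refl in blast)
    finally show "q dvd y \<longleftrightarrow> q \<in> Sy" .
  qed
  have "coprime (A*x*x + B*x*y + Cc*y*y) N"
  proof (rule coprime_by_primes[OF N])
    fix p :: int assume p: "prime p" "p dvd N"
    then have pP: "p \<in> P" unfolding P_def using N by (simp add: in_prime_factors_iff)
    show "\<not> p dvd A*x*x + B*x*y + Cc*y*y"
    proof
      assume pQ: "p dvd A*x*x + B*x*y + Cc*y*y"
      consider "p dvd A" "\<not> p dvd Cc" | "\<not> p dvd A" | "p dvd A" "p dvd Cc" by blast
      then show False
      proof cases
        case 1
        have "p dvd x" using dx[OF p(1)] pP 1 unfolding Sx_def by simp
        have "\<not> p dvd y" using dy[OF p(1)] 1 unfolding Sy_def by simp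
        then have "p dvd A*x*x + B*x*y" using \<open>p dvd x\<close> by simp
        then have "p dvd Cc*y*y" using pQ by (simp add: dvd_add_right_iff)
        then show False using 1 \<open>\<not> p dvd y\<close> p by (simp add: prime_dvd_mult_iff)
      next
        case 2
        have "p dvd y" using dy[OF p(1)] pP 2 unfolding Sy_def by simp
        have "\<not> p dvd x" using dx[OF p(1)] 2 unfolding Sx_def by simp
        then have "p dvd B*x*y + Cc*y*y" using \<open>p dvd y\<close> by simp
        then have "p dvd A*x*x" using pQ by (simp add: dvd_add_left_iff add.assoc)
        then show False using 2 \<open>\<not> p dvd x\<close> p by (simp add: prime_dvd_mult_iff)
      next
        case 3
        have "\<not> p dvd y" using dy[OF p(1)] 3 unfolding Sy_def by simp
        have "\<not> p dvd x" using dx[OF p(1)] 3 unfolding Sx_def by simp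
        have "p dvd A*x*x" "p dvd Cc*y*y" using 3 by simp_all
        then have "p dvd B*x*y" using pQ by (metis dvd_add_right_iff add.commute)
        then have "p dvd B" using \<open>\<not> p dvd y\<close> \<open>\<not> p dvd x\<close> p by (simp add: prime_dvd_mult_iff)
        then show False using prim[OF p(1)] 3 by blast
      qed
    qed
  qed
  then show ?thesis by blast
qed




lemma LM0: "0 \<in> lat_mult A B"
  unfolding lat_mult_def by (intro CollectI exI[of _ 0]) simp

lemma LMext: assumes "w \<in> lat_mult A B" "x \<in> A" "y \<in> B" shows "w + x*y \<in> lat_mult A B"
proof -
  have "\<exists>(n::nat) xs ys. w = (\<Sum>i<n. xs i * ys i) \<and> (\<forall>i<n. xs i \<in> A \<and> ys i \<in> B)"
    using assms(1) unfolding lat_mult_def by (rule CollectD)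
  then obtain n :: nat and xs ys where w: "w = (\<Sum>i<n. xs i * ys i)" "\<forall>i<n. xs i \<in> A \<and> ys i \<in> B"
    by (elim exE conjE)
  define xs' where "xs' = xs(n := x)"
  define ys' where "ys' = ys(n := y)"
  have "(\<Sum>i<Suc n. xs' i * ys' i) = (\<Sum>i<n. xs' i * ys' i) + x * y" unfolding xs'_def ys'_def by simp
  also have "(\<Sum>i<n. xs' i * ys' i) = (\<Sum>i<n. xs i * ys i)" unfolding xs'_def ys'_def by (rule sum.cong) auto
  finally have "w + x*y = (\<Sum>i<Suc n. xs' i * ys' i)" using w by simp
  moreover have "\<forall>i<Suc n. xs' i \<in> A \<and> ys' i \<in> B" using w(2) assms unfolding xs'_def ys'_def
    by (auto simp: less_Suc_eq)
  ultimately show ?thesis unfolding lat_mult_def by blast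
qed

lemma LMind:
  assumes "w \<in> lat_mult A B" "P 0" "\<And>w x y. P w \<Longrightarrow> x \<in> A \<Longrightarrow> y \<in> B \<Longrightarrow> P (w + x*y)"
  shows "P w"
proof -
  have "\<exists>(n::nat) xs ys. w = (\<Sum>i<n. xs i * ys i) \<and> (\<forall>i<n. xs i \<in> A \<and> ys i \<in> B)"
    using assms(1) unfolding lat_mult_def by (rule CollectD)
  then obtain n :: nat and xs ys where w: "w = (\<Sum>i<n. xs i * ys i)" "\<forall>i<n. xs i \<in> A \<and> ys i \<in> B"
    by (elim exE conjE)
  have "\<forall>k\<le>n. P (\<Sum>i<k. xs i * ys i)"
  proof (intro allI impI)
    fix k assume "k \<le> n"
    then show "P (\<Sum>i<k. xs i * ys i)"
    proof (induction k)
      case 0 then show ?case using assms(2) by simp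
    next
      case (Suc k)
      then have "P (\<Sum>i<k. xs i * ys i)" by simp
      moreover have "xs k \<in> A" "ys k \<in> B" using w(2) Suc.prems by auto
      ultimately show ?case using assms(3) by simp
    qed
  qed
  then show ?thesis using w by simp
qed

lemma LM1: "x \<in> A \<Longrightarrow> y \<in> B \<Longrightarrow> x * y \<in> lat_mult A B"
  using LMext[OF LM0] by fastforce

lemma LMadd: assumes "w1 \<in> lat_mult A B" "w2 \<in> lat_mult A B" shows "w1 + w2 \<in> lat_mult A B"
  using assms(2)
proof (rule LMind)
  show "w1 + 0 \<in> lat_mult A B" using assms(1) by simp
next
  fix w x y assume "w1 + w \<in> lat_mult A B" "x \<in> A" "y \<in> B"
  then have "(w1 + w) + x*y \<in> lat_mult A B" by (rule LMext)
  then show "w1 + (w + x*y) \<in> lat_mult A B" by (simp add: add.assoc)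
qed

lemma LMsub:
  assumes "0 \<in> T" "\<And>x y. x \<in> T \<Longrightarrow> y \<in> T \<Longrightarrow> x + y \<in> T" "\<And>x y. x \<in> A \<Longrightarrow> y \<in> B \<Longrightarrow> x * y \<in> T"
  shows "lat_mult A B \<subseteq> T"
proof
  fix w assume "w \<in> lat_mult A B"
  then show "w \<in> T" by (rule LMind) (use assms in auto)
qed

lemma LMmap:
  assumes "w \<in> lat_mult A B" "\<And>x. x \<in> A \<Longrightarrow> c * x \<in> A2" "\<And>y. y \<in> B \<Longrightarrow> e * y \<in> B2"
  shows "c * e * w \<in> lat_mult A2 B2"
  using assms(1)
proof (rule LMind)
  show "c * e * 0 \<in> lat_mult A2 B2" using LM0 by simp
next
  fix w x y assume h: "c * e * w \<in> lat_mult A2 B2" "x \<in> A" "y \<in> B"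
  have "c * e * w + (c*x) * (e*y) \<in> lat_mult A2 B2" using LMext[OF h(1) assms(2)[OF h(2)] assms(3)[OF h(3)]] .
  then show "c * e * (w + x*y) \<in> lat_mult A2 B2" by (simp add: algebra_simps)
qed

lemma LMmono: assumes "A \<subseteq> A2" "B \<subseteq> B2" shows "lat_mult A B \<subseteq> lat_mult A2 B2"
proof
  fix w assume "w \<in> lat_mult A B"
  then have "1 * 1 * w \<in> lat_mult A2 B2" by (rule LMmap) (use assms in auto)
  then show "w \<in> lat_mult A2 B2" by simp
qed

context qf begin

lemma ideal_lattice:
  assumes "k > 0" "S \<subseteq> qf_order d k" "subgrp S" "stab k S" "z \<in> S" "z \<noteq> 0"
  shows "is_lattice d S"
proof -
  obtain C a r where "C > 0" "a > 0" "S = {of_int i * of_int (C*a) + of_int j * (of_int C * (of_int r + wk k)) | i j. True}"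
    using hnf[OF assms] by blast
  then show ?thesis using hnf_lattice[OF assms(1)] by simp
qed

lemma ord_subgrp: "subgrp (qf_order d k)"
  unfolding subgrp_def using ord_add ord_minus by auto

definition cp :: "nat \<Rightarrow> real set \<Rightarrow> int \<Rightarrow> bool" where
  "cp k I N \<longleftrightarrow> (\<exists>x\<in>I. \<exists>y\<in>qf_order d k. 1 = x + of_int N * y)"

lemma cp_mult:
  assumes "I \<subseteq> qf_order d k" "subgrp I" "stab k I" "cp k I A" "cp k I A'"
  shows "cp k I (A * A')"
proof -
  obtain x y where xy: "x \<in> I" "y \<in> qf_order d k" "1 = x + of_int A * y" using assms(4) cp_def by blast
  obtain x' y' where xy': "x' \<in> I" "y' \<in> qf_order d k" "1 = x' + of_int A' * y'" using assms(5) cp_def by blast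
  have e: "1 = (x * x' + (of_int A' * y') * x + (of_int A * y) * x') + of_int (A*A') * (y*y')"
  proof -
    have "1 = (x + of_int A * y) * (x' + of_int A' * y')" using xy(3) xy'(3) by simp
    then show ?thesis by (simp add: algebra_simps)
  qed
  have sI: "\<And>r z. r \<in> qf_order d k \<Longrightarrow> z \<in> I \<Longrightarrow> r * z \<in> I" using assms(3) stab_def by blast
  have aI: "\<And>u v. u \<in> I \<Longrightarrow> v \<in> I \<Longrightarrow> u + v \<in> I" using assms(2) subgrp_def by blast
  have xk: "x \<in> qf_order d k" using xy(1) assms(1) by blast
  have "x * x' \<in> I" using sI[OF xk xy'(1)] .
  moreover have "(of_int A' * y') * x \<in> I" using sI[OF ord_mult[OF ord_int xy'(2)] xy(1)] .
  moreover have "(of_int A * y) * x' \<in> I" using sI[OF ord_mult[OF ord_int xy(2)] xy'(1)] .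
  ultimately have "x * x' + (of_int A' * y') * x + (of_int A * y) * x' \<in> I" using aI by blast
  moreover have "y*y' \<in> qf_order d k" using ord_mult xy(2) xy'(2) by blast
  ultimately show ?thesis unfolding cp_def using e by blast
qed

lemma cp_pow:
  assumes "I \<subseteq> qf_order d k" "subgrp I" "stab k I" "cp k I A"
  shows "cp k I (A ^ j)"
proof (induction j)
  case 0
  have "0 \<in> I" using assms(2) subgrp_def by blast
  moreover have "(1::real) = 0 + of_int (A^0) * 1" by simp
  ultimately show ?case unfolding cp_def using ord_1 by blast
next
  case (Suc j)
  then have "cp k I (A * A^j)" using cp_mult[OF assms(1-3) assms(4) Suc] by simp
  then show ?case by simp
qed

lemma cp_dvd:
  assumes "cp k I A" "A' dvd A" shows "cp k I A'"
proof -
  obtain x y where xy: "x \<in> I" "y \<in> qf_order d k" "1 = x + of_int A * y" using assms(1) cp_def by blast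
  obtain q where q: "A = A' * q" using assms(2) by blast
  have "1 = x + of_int A' * (of_int q * y)" using xy(3) q by (simp add: algebra_simps)
  moreover have "of_int q * y \<in> qf_order d k" using ord_mult[OF ord_int xy(2)] .
  ultimately show ?thesis unfolding cp_def using xy(1) by blast
qed

end

locale qf2 = qf +
  fixes n f m :: nat
  assumes n1: "n \<ge> 1" and f1: "f \<ge> 1" and m1: "m \<ge> 1"
begin

abbreviation "Ok \<equiv> qf_order d m"
abbreviation "Oq \<equiv> qf_order d (n*m)"

lemma Oq_sub: "Oq \<subseteq> Ok" by (rule ord_mono)

lemma nm_pos: "n * m > 0" "m > 0" using n1 m1 by auto

lemma Ik_facts:
  assumes "a \<in> I_ord d Ok (lat_scale (of_nat (n * f)) Ok)"
  shows "is_lattice d a" "\<And>r x. r \<in> Ok \<Longrightarrow> x \<in> a \<Longrightarrow> r * x \<in> a" "lat_End d a = Ok" "a \<subseteq> Ok"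
    "\<exists>x\<in>a. \<exists>z\<in>Ok. 1 = x + of_nat (n*f) * z"
proof -
  show "is_lattice d a" "\<And>r x. r \<in> Ok \<Longrightarrow> x \<in> a \<Longrightarrow> r * x \<in> a" "lat_End d a = Ok" "a \<subseteq> Ok"
    using assms unfolding I_ord_def is_invertible_ideal_def is_ideal_def by auto
  have "lat_sum a (lat_scale (of_nat (n * f)) Ok) = Ok" using assms unfolding I_ord_def by auto
  then have "1 \<in> lat_sum a (lat_scale (of_nat (n * f)) Ok)" using ord_1 by simp
  then show "\<exists>x\<in>a. \<exists>z\<in>Ok. 1 = x + of_nat (n*f) * z" unfolding lat_sum_def lat_scale_def by blast
qed

lemma subgrp_Int: "subgrp A \<Longrightarrow> subgrp B \<Longrightarrow> subgrp (A \<inter> B)"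
  unfolding subgrp_def by auto

lemma nfz_Oq: "z \<in> Ok \<Longrightarrow> of_nat (n*f) * z \<in> Oq"
proof -
  assume "z \<in> Ok"
  then have "of_nat n * (of_nat f * z) \<in> Oq" using ord_scale ord_mult ord_nat by blast
  then show ?thesis by (simp add: mult.assoc)
qed

lemma part1:
  assumes a: "a \<in> I_ord d Ok (lat_scale (of_nat (n * f)) Ok)"
  shows "is_invertible_ideal d Oq (a \<inter> Oq)" "a \<inter> Oq \<in> I_ord d Oq (lat_scale (of_nat f) Oq)"
proof -
  note F = Ik_facts[OF a]
  obtain x z where xz: "x \<in> a" "z \<in> Ok" "1 = x + of_nat (n*f) * z" using F(5) by blast
  have nfz: "of_nat (n*f) * z \<in> Oq" using nfz_Oq[OF xz(2)] .
  have "x = 1 - of_nat (n*f) * z" using xz(3) by simp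
  then have xq: "x \<in> Oq" using ord_diff[OF ord_1 nfz] by simp
  define S where "S = a \<inter> Oq"
  have xS: "x \<in> S" using xz(1) xq S_def by simp
  have sgS: "subgrp S" unfolding S_def using subgrp_Int lattice_subgrp(1)[OF F(1)] ord_subgrp by blast
  have stS: "stab (n*m) S" unfolding stab_def S_def using F(2) Oq_sub ord_mult by blast
  obtain z0 where z0: "z0 \<in> a" "z0 \<noteq> 0" using lattice_subgrp(3)[OF F(1)] by blast
  have "of_nat n * z0 \<in> S" unfolding S_def using F(2)[OF ord_nat z0(1)] ord_scale[of z0 m n] F(4) z0(1) by blast
  moreover have "of_nat n * z0 \<noteq> 0" using z0 n1 by simp
  ultimately have latS: "is_lattice d S" using ideal_lattice[OF nm_pos(1) _ sgS stS] S_def by blast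
  have EndS: "lat_End d S = Oq"
  proof
    show "Oq \<subseteq> lat_End d S" unfolding lat_End_def using ord_K stS stab_def by blast
  next
    show "lat_End d S \<subseteq> Oq"
    proof
      fix c assume "c \<in> lat_End d S"
      then have cK: "c \<in> qf_K d" and cS: "\<And>s. s \<in> S \<Longrightarrow> c * s \<in> S" unfolding lat_End_def by auto
      have cxS: "c * x \<in> S" using cS[OF xS] .
      have "c \<in> lat_End d a" unfolding lat_End_def
      proof (intro CollectI conjI ballI)
        show "c \<in> qf_K d" by (rule cK)
        fix y assume y: "y \<in> a"
        have e: "c * y = (c * x) * y + c * (of_nat (n*f) * (z * y))"
        proof -
          have "c * y = c * y * (x + of_nat (n*f) * z)" using xz(3) by simp
          then show ?thesis by (simp add: algebra_simps)
        qed
        have "(c * x) * y \<in> a" using F(2)[of "c*x" y] cxS y F(4) S_def by blast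
        moreover have "of_nat (n*f) * (z * y) \<in> S"
        proof -
          have zy: "z * y \<in> a" using F(2)[OF xz(2) y] .
          have "of_nat (n*f) * (z * y) \<in> a" using F(2)[OF ord_nat zy] .
          moreover have "of_nat (n*f) * (z * y) \<in> Oq" using nfz_Oq zy F(4) by blast
          ultimately show ?thesis using S_def by blast
        qed
        then have "c * (of_nat (n*f) * (z * y)) \<in> a" using cS S_def by blast
        ultimately show "c * y \<in> a" unfolding e using lattice_subgrp(1)[OF F(1)] subgrp_def by blast
      qed
      then have cO: "c \<in> Ok" using F(3) by simp
      have e: "c = c * x + of_nat (n*f) * (c * z)"
      proof -
        have "c = c * (x + of_nat (n*f) * z)" using xz(3) by simp
        then show ?thesis by (simp add: algebra_simps)
      qed
      have "c * x \<in> Oq" using cxS S_def by blast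
      moreover have "of_nat (n*f) * (c * z) \<in> Oq" using nfz_Oq ord_mult[OF cO xz(2)] by blast
      ultimately show "c \<in> Oq" using e ord_add by metis
    qed
  qed
  have ideal: "is_invertible_ideal d Oq S"
    unfolding is_invertible_ideal_def is_ideal_def using latS EndS stS stab_def by blast
  then show "is_invertible_ideal d Oq (a \<inter> Oq)" using S_def by simp
  have "lat_sum S (lat_scale (of_nat f) Oq) = Oq"
  proof
    show "lat_sum S (lat_scale (of_nat f) Oq) \<subseteq> Oq"
      unfolding lat_sum_def lat_scale_def S_def using ord_add ord_mult ord_nat by blast
  next
    show "Oq \<subseteq> lat_sum S (lat_scale (of_nat f) Oq)"
    proof
      fix r assume r: "r \<in> Oq"
      have e: "r = r * x + of_nat f * (of_nat n * (r * z))"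
      proof -
        have "r = r * (x + of_nat (n*f) * z)" using xz(3) by simp
        then show ?thesis by (simp add: algebra_simps)
      qed
      have "r * x \<in> S" using stS r xS stab_def by blast
      moreover have "of_nat n * (r * z) \<in> Oq" using ord_scale ord_mult[OF _ xz(2)] r Oq_sub by blast
      ultimately show "r \<in> lat_sum S (lat_scale (of_nat f) Oq)"
        unfolding lat_sum_def lat_scale_def using e by blast
    qed
  qed
  then show "a \<inter> Oq \<in> I_ord d Oq (lat_scale (of_nat f) Oq)"
    unfolding I_ord_def using ideal S_def by blast
qed

lemma coprime_n_elem:
  assumes a: "a \<in> I_ord d Ok (lat_scale (of_nat (n * f)) Ok)"
  shows "\<exists>x1 t. x1 \<in> a \<inter> Oq \<and> t \<in> Ok \<and> 1 = x1 + of_nat n * of_nat n * t"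
proof -
  note F = Ik_facts[OF a]
  obtain x z where xz: "x \<in> a" "z \<in> Ok" "1 = x + of_nat (n*f) * z" using F(5) by blast
  have nfz: "of_nat (n*f) * z \<in> Oq" using nfz_Oq[OF xz(2)] .
  have "x = 1 - of_nat (n*f) * z" using xz(3) by simp
  then have xq: "x \<in> Oq" using ord_diff[OF ord_1 nfz] by simp
  define z1 where "z1 = of_nat f * z"
  have z1: "z1 \<in> Ok" unfolding z1_def using ord_mult[OF ord_nat xz(2)] .
  have two: "2 - x \<in> Oq" using ord_diff[OF ord_int[of 2] xq] by simp
  have "x * (2 - x) \<in> a" using F(2)[OF _ xz(1), of "2 - x"] two Oq_sub by (auto simp: mult.commute)
  moreover have "x * (2 - x) \<in> Oq" using ord_mult[OF xq two] .
  moreover have "z1 * z1 \<in> Ok" using ord_mult[OF z1 z1] .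
  moreover have "1 = x * (2 - x) + of_nat n * of_nat n * (z1 * z1)"
  proof -
    have xe: "x = 1 - of_nat n * z1" using xz(3) unfolding z1_def by (simp add: algebra_simps)
    show ?thesis unfolding xe by (simp add: algebra_simps)
  qed
  ultimately show ?thesis by blast
qed

lemma part_mult:
  assumes a: "a \<in> I_ord d Ok (lat_scale (of_nat (n * f)) Ok)"
    and a': "a' \<in> I_ord d Ok (lat_scale (of_nat (n * f)) Ok)"
  shows "lat_mult a a' \<inter> Oq = lat_mult (a \<inter> Oq) (a' \<inter> Oq)"
proof
  note F = Ik_facts[OF a] and F' = Ik_facts[OF a']
  have stS: "stab (n*m) (a \<inter> Oq)" "stab (n*m) (a' \<inter> Oq)"
    using part1(1)[OF a] part1(1)[OF a'] unfolding is_invertible_ideal_def is_ideal_def stab_def by blast+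
  show "lat_mult (a \<inter> Oq) (a' \<inter> Oq) \<subseteq> lat_mult a a' \<inter> Oq"
  proof -
    have "lat_mult (a \<inter> Oq) (a' \<inter> Oq) \<subseteq> lat_mult a a'" by (rule LMmono) blast+
    moreover have "lat_mult (a \<inter> Oq) (a' \<inter> Oq) \<subseteq> Oq"
    proof (rule LMsub)
      show "0 \<in> Oq" by simp
      show "\<And>x y. x \<in> Oq \<Longrightarrow> y \<in> Oq \<Longrightarrow> x + y \<in> Oq" by (rule ord_add)
      show "\<And>x y. x \<in> a \<inter> Oq \<Longrightarrow> y \<in> a' \<inter> Oq \<Longrightarrow> x * y \<in> Oq" using ord_mult by blast
    qed
    ultimately show ?thesis by blast
  qed
  show "lat_mult a a' \<inter> Oq \<subseteq> lat_mult (a \<inter> Oq) (a' \<inter> Oq)"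
  proof
    fix w assume w: "w \<in> lat_mult a a' \<inter> Oq"
    obtain x1 t where x1: "x1 \<in> a \<inter> Oq" "t \<in> Ok" "1 = x1 + of_nat n * of_nat n * t"
      using coprime_n_elem[OF a] by blast
    obtain x2 t' where x2: "x2 \<in> a' \<inter> Oq" "t' \<in> Ok" "1 = x2 + of_nat n * of_nat n * t'"
      using coprime_n_elem[OF a'] by blast
    define tt where "tt = t + t' - of_nat n * of_nat n * t * t'"
    have tt: "tt \<in> Ok" unfolding tt_def
      using ord_diff[OF ord_add[OF x1(2) x2(2)] ord_mult[OF ord_mult[OF ord_mult[OF ord_nat ord_nat] x1(2)] x2(2)]] .
    have e: "w = (w * x1) * x2 + of_nat n * of_nat n * (tt * w)"
    proof -
      have h1: "1 = x1 * x2 + of_nat n * of_nat n * tt"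
      proof -
        have e1: "x1 = 1 - of_nat n * of_nat n * t" and e2: "x2 = 1 - of_nat n * of_nat n * t'" using x1(3) x2(3) by linarith+
        show ?thesis unfolding tt_def e1 e2 by (simp add: algebra_simps)
      qed
      have "w * (x1 * x2 + of_nat n * of_nat n * tt) = w" unfolding h1[symmetric] by simp
      moreover have "w * (x1 * x2 + of_nat n * of_nat n * tt) = (w * x1) * x2 + of_nat n * of_nat n * (tt * w)"
        by (simp add: algebra_simps)
      ultimately show ?thesis by linarith
    qed
    have wq: "w \<in> Oq" using w by blast
    have "w * x1 \<in> a \<inter> Oq" using stS(1) wq x1(1) unfolding stab_def by blast
    then have "(w * x1) * x2 \<in> lat_mult (a \<inter> Oq) (a' \<inter> Oq)" using x2(1) by (rule LM1)
    moreover have "of_nat n * of_nat n * (tt * w) \<in> lat_mult (a \<inter> Oq) (a' \<inter> Oq)"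
    proof -
      have wa: "w \<in> lat_mult a a'" using w by blast
      have "tt * 1 * w \<in> lat_mult a a'"
        by (rule LMmap[OF wa]) (use F(2)[OF tt] in simp_all)
      then have "tt * w \<in> lat_mult a a'" by simp
      then show ?thesis
      proof (rule LMmap)
        fix x assume "x \<in> a"
        then show "of_nat n * x \<in> a \<inter> Oq" using F(2)[OF ord_nat, of x n] ord_scale[of x m n] F(4) by blast
      next
        fix x assume "x \<in> a'"
        then show "of_nat n * x \<in> a' \<inter> Oq" using F'(2)[OF ord_nat, of x n] ord_scale[of x m n] F'(4) by blast
      qed
    qed
    ultimately have "(w * x1) * x2 + of_nat n * of_nat n * (tt * w) \<in> lat_mult (a \<inter> Oq) (a' \<inter> Oq)" by (rule LMadd)
    then show "w \<in> lat_mult (a \<inter> Oq) (a' \<inter> Oq)" by (simp only: e[symmetric])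
  qed
qed

lemma part_equiv:
  assumes a: "a \<in> I_ord d Ok (lat_scale (of_nat (n * f)) Ok)"
    and a': "a' \<in> I_ord d Ok (lat_scale (of_nat (n * f)) Ok)"
    and eq: "lat_equiv d (n * f) a a'"
  shows "lat_equiv d f (a \<inter> Oq) (a' \<inter> Oq)"
proof -
  note F = Ik_facts[OF a] and F' = Ik_facts[OF a']
  obtain c u where c: "c = of_nat (n*f) * u + 1" "u \<in> lat_inv d a" "totally_positive d c" "lat_scale c a = a'"
    using eq unfolding lat_equiv_def by blast
  have uK: "u \<in> qf_K d" and ux: "\<And>x. x \<in> a \<Longrightarrow> u * x \<in> Ok" using c(2) F(3) unfolding lat_inv_def by auto
  have EndS: "lat_End d (a \<inter> Oq) = Oq" using part1(1)[OF a] unfolding is_invertible_ideal_def by blast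
  have nu: "of_nat n * u \<in> lat_inv d (a \<inter> Oq)" unfolding lat_inv_def EndS
  proof (intro CollectI conjI ballI)
    show "of_nat n * u \<in> qf_K d" using uK K_mult K_of_nat by blast
    fix x assume "x \<in> a \<inter> Oq"
    then have "of_nat n * (u * x) \<in> Oq" using ux ord_scale by blast
    then show "of_nat n * u * x \<in> Oq" by (simp add: mult.assoc)
  qed
  have cx: "\<And>x. x \<in> a \<Longrightarrow> c * x = x + of_nat (n*f) * (u * x)" using c(1) by (simp add: algebra_simps)
  have "lat_scale c (a \<inter> Oq) = a' \<inter> Oq"
  proof
    show "lat_scale c (a \<inter> Oq) \<subseteq> a' \<inter> Oq"
    proof
      fix y assume "y \<in> lat_scale c (a \<inter> Oq)"
      then obtain x where x: "x \<in> a" "x \<in> Oq" "y = c * x" unfolding lat_scale_def by blast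
      have "y \<in> a'" using c(4) x unfolding lat_scale_def by blast
      moreover have "y \<in> Oq"
      proof -
        have "x + of_nat (n*f) * (u * x) \<in> Oq" using ord_add[OF x(2) nfz_Oq[OF ux[OF x(1)]]] .
        then show ?thesis using x(3) cx[OF x(1)] by simp
      qed
      ultimately show "y \<in> a' \<inter> Oq" by blast
    qed
  next
    show "a' \<inter> Oq \<subseteq> lat_scale c (a \<inter> Oq)"
    proof
      fix y assume y: "y \<in> a' \<inter> Oq"
      then obtain x where x: "x \<in> a" "y = c * x" using c(4) unfolding lat_scale_def by blast
      have xe: "x = y - of_nat (n*f) * (u * x)" using cx[OF x(1)] x(2) by simp
      have yq: "y \<in> Oq" using y by blast
      have "y - of_nat (n*f) * (u * x) \<in> Oq" using ord_diff[OF yq nfz_Oq[OF ux[OF x(1)]]] .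
      then have "x \<in> Oq" by (simp only: xe[symmetric])
      then show "y \<in> lat_scale c (a \<inter> Oq)" using x unfolding lat_scale_def by blast
    qed
  qed
  moreover have "c = of_nat f * (of_nat n * u) + 1" using c(1) by (simp add: algebra_simps)
  ultimately show ?thesis unfolding lat_equiv_def using nu c(3) by blast
qed

end



lemma split_n:
  fixes n f :: nat
  assumes "n \<ge> 1" "f \<ge> 1"
  shows "\<exists>n1 n2. n = n1 * n2 \<and> coprime n2 f \<and> (\<exists>k. n1 dvd f ^ k)"
  using assms(1)
proof (induction n rule: less_induct)
  case (less n)
  show ?case
  proof (cases "coprime n f")
    case True
    then show ?thesis by (intro exI[of _ 1] exI[of _ n]) (auto intro: exI[of _ 0])
  next
    case False
    then have "gcd n f \<noteq> 1" by (simp add: coprime_iff_gcd_eq_1)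
    moreover have "gcd n f \<noteq> 0" using less.prems by simp
    ultimately obtain p where p: "prime p" "p dvd gcd n f"
      using prime_divisor_exists[of "gcd n f"] by auto
    then have pn: "p dvd n" and pf: "p dvd f" by auto
    obtain n' where n': "n = p * n'" using pn by blast
    have "p > 1" using p prime_gt_1_nat by blast
    then have "n' < n" "n' \<ge> 1" using n' less.prems by (auto simp: Suc_le_eq)
    then obtain n1 n2 k where ih: "n' = n1 * n2" "coprime n2 f" "n1 dvd f ^ k" using less.IH by blast
    have "p * n1 dvd f * f ^ k" using pf ih(3) by (rule mult_dvd_mono)
    then have "p * n1 dvd f ^ Suc k" by simp
    then have ek: "\<exists>k. p * n1 dvd f ^ k" by blast
    have "n = (p * n1) * n2 \<and> coprime n2 f \<and> (\<exists>k. p * n1 dvd f ^ k)" using ih n' ek by (auto simp: mult.assoc)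
    then show ?thesis by blast
  qed
qed

context qf begin

lemma rho_props:
  fixes x y :: int
  assumes k: "k > 0" and C: "C > 0" and a: "a > 0" and ac: "a * cc = r*r + r*(int k*T) - int k^2*U"
    and S: "S = {of_int i * of_int (C*a) + of_int j * (of_int C * (of_int r + wk k)) | i j. True}"
  defines "\<beta> \<equiv> of_int x * of_int (C*a) + of_int y * (of_int C * (of_int r + wk k))"
    and "\<rho> \<equiv> (of_int (a*x) + of_int y * (of_int (r + int k*T) - wk k)) / of_int (C*a)"
  shows "\<beta> \<in> S" "\<rho> \<in> qf_K d" "\<rho> * \<beta> = of_int (a*x*x + (2*r + int k*T)*x*y + cc*y*y)"
    "\<forall>s\<in>S. \<rho> * s \<in> qf_order d k"
proof -
  define w where "w = wk k"
  define t where "t = int k * T"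
  define Z where "Z = (of_int r + of_int t - w) * (of_int r + w)"
  have Z: "Z = of_int (a * cc)" unfolding Z_def ac w_def t_def by (rule rw_identity)
  define P where "P = of_int (a*x) + of_int y * (of_int r + of_int t - w)"
  have rho: "\<rho> = P / of_int (C*a)" unfolding \<rho>_def P_def w_def t_def by simp
  have Ca: "(of_int (C*a) :: real) \<noteq> 0" using C a by simp
  have CaP: "of_int (C*a) * \<rho> = P" unfolding rho using Ca by simp
  show "\<beta> \<in> S" unfolding S \<beta>_def by blast
  show "\<rho> \<in> qf_K d" unfolding rho P_def w_def using ord_K[OF wk_in]
    by (intro K_divide K_add K_mult K_diff K_of_int) auto
  have "of_int (C*a) * (\<rho> * \<beta>) = P * \<beta>" using CaP by (simp add: mult.assoc[symmetric])
  also have "\<dots> = of_int C * (of_int (a*x) * of_int (a*x) + of_int (a*x) * of_int y * (of_int (2*r+t))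
                   + of_int y * of_int y * Z)"
    unfolding P_def \<beta>_def Z_def w_def by (simp add: algebra_simps)
  also have "\<dots> = of_int (C*a) * of_int (a*x*x + (2*r + int k*T)*x*y + cc*y*y)"
    unfolding Z t_def by (simp add: algebra_simps)
  finally show "\<rho> * \<beta> = of_int (a*x*x + (2*r + int k*T)*x*y + cc*y*y)" using Ca by simp
  show "\<forall>s\<in>S. \<rho> * s \<in> qf_order d k"
  proof
    fix s assume "s \<in> S"
    then obtain i j where s: "s = of_int i * of_int (C*a) + of_int j * (of_int C * (of_int r + w))"
      unfolding S w_def by blast
    define E where "E = of_int (a*x*i + y*j*cc) + of_int (x*j) * (of_int r + w) + of_int (y*i) * (of_int r + of_int t - w)"
    have "of_int (C*a) * (\<rho> * s) = P * s" using CaP by (simp add: mult.assoc[symmetric])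
    also have "\<dots> = of_int C * (of_int a * of_int (a*x*i) + of_int a * of_int (x*j) * (of_int r + w)
                   + of_int a * of_int (y*i) * (of_int r + of_int t - w) + of_int (y * j) * Z)"
      unfolding P_def s Z_def by (simp add: algebra_simps)
    also have "\<dots> = of_int (C*a) * E" unfolding Z E_def by (simp add: algebra_simps)
    finally have "\<rho> * s = E" using Ca by simp
    moreover have "E \<in> qf_order d k" unfolding E_def w_def
      using wk_in by (intro ord_add ord_mult ord_int ord_diff) auto
    ultimately show "\<rho> * s \<in> qf_order d k" by simp
  qed
qed

end

lemma bezout_coprime: fixes A B u v :: int assumes "u*A + v*B = 1" shows "coprime A B"
proof (rule coprimeI)
  fix c assume "c dvd A" "c dvd B"
  then have "c dvd u*A + v*B" by simp
  then show "is_unit c" using assms by simp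
qed

lemma coprime_bezout: fixes A B :: int assumes "coprime A B" shows "\<exists>u v. u*A + v*B = 1"
  using bezout_int[of A B] assms by simp

context qf2 begin

lemma K_1[simp]: "1 \<in> qf_K d" using K_of_int[of 1] by simp

lemma part_surj:
  assumes b: "b \<in> I_ord d Oq (lat_scale (of_nat f) Oq)"
  shows "\<exists>aa \<in> I_ord d Ok (lat_scale (of_nat (n * f)) Ok). lat_equiv d f (aa \<inter> Oq) b"
proof -
  have latb: "is_lattice d b" and stb: "\<And>r x. r \<in> Oq \<Longrightarrow> x \<in> b \<Longrightarrow> r * x \<in> b"
    and Endb: "lat_End d b = Oq" and bsub: "b \<subseteq> Oq"
    and sumb: "lat_sum b (lat_scale (of_nat f) Oq) = Oq"
    using b unfolding I_ord_def is_invertible_ideal_def is_ideal_def by auto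
  have "1 \<in> lat_sum b (lat_scale (of_nat f) Oq)" using sumb ord_1 by simp
  then obtain x0 y0 where x0: "x0 \<in> b" "y0 \<in> Oq" "1 = x0 + of_nat f * y0"
    unfolding lat_sum_def lat_scale_def by blast
  have sgb: "subgrp b" using lattice_subgrp(1)[OF latb] .
  have b0: "0 \<in> b" and badd: "\<And>u v. u \<in> b \<Longrightarrow> v \<in> b \<Longrightarrow> u + v \<in> b"
    and bneg: "\<And>u. u \<in> b \<Longrightarrow> - u \<in> b" using sgb unfolding subgrp_def by auto
  have bK: "b \<subseteq> qf_K d" using lattice_subgrp(2)[OF latb] .
  obtain z where z: "z \<in> b" "z \<noteq> 0" using lattice_subgrp(3)[OF latb] by blast
  have stabb: "stab (n*m) b" unfolding stab_def using stb by blast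
  obtain C a r where Car: "C > 0" "a > 0" "a dvd (r*r + r*(int (n*m)*T) - int (n*m)^2*U)"
    "b = {of_int i * of_int (C*a) + of_int j * (of_int C * (of_int r + wk (n*m))) | i j. True}"
    using hnf[OF nm_pos(1) bsub sgb stabb z] by blast
  obtain cc where cc: "a * cc = r*r + r*(int (n*m)*T) - int (n*m)^2*U" using Car(3) by (metis dvdE)
  have prim: "\<And>p. prime p \<Longrightarrow> p dvd a \<Longrightarrow> p dvd (2*r + int (n*m)*T) \<Longrightarrow> p dvd cc \<Longrightarrow> False"
    using hnf_primitive[OF nm_pos(1) Car(1) Car(2) cc Car(4) Endb] by blast
  obtain n1 n2 kk where nsplit: "n = n1 * n2" "coprime n2 f" "n1 dvd f ^ kk"
    using split_n[OF n1 f1] by blast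
  have n2pos: "int n2 \<noteq> 0" using nsplit(1) n1 by auto
  have "\<exists>x y. coprime (a*x*x + (2*r + int (n*m)*T)*x*y + cc*y*y) (int n2)"
  proof (rule form_coprime[OF _ n2pos])
    fix p :: int assume "prime p" "p dvd a" "p dvd 2*r + int (n*m)*T" "p dvd cc"
    then show False using prim by blast
  qed
  then obtain x y where xy: "coprime (a*x*x + (2*r + int (n*m)*T)*x*y + cc*y*y) (int n2)" by blast
  define Q where "Q = a*x*x + (2*r + int (n*m)*T)*x*y + cc*y*y"
  define \<beta> where "\<beta> = of_int x * of_int (C*a) + of_int y * (of_int C * (of_int r + wk (n*m)))"
  define \<rho> where "\<rho> = (of_int (a*x) + of_int y * (of_int (r + int (n*m)*T) - wk (n*m))) / of_int (C*a)"
  note R = rho_props[OF nm_pos(1) Car(1) Car(2) cc Car(4), of x y, folded \<beta>_def \<rho>_def Q_def]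
  have \<beta>b: "\<beta> \<in> b" and \<rho>K: "\<rho> \<in> qf_K d" and \<rho>\<beta>: "\<rho> * \<beta> = of_int Q"
    and \<rho>s: "\<And>s. s \<in> b \<Longrightarrow> \<rho> * s \<in> Oq" using R by auto
  have "coprime (int f) (int n2)" using nsplit(2) by (simp add: coprime_commute)
  then obtain e h where eh: "e * int f + h * int n2 = 1" using coprime_bezout by blast
  define \<mu>0 where "\<mu>0 = 1 + of_int (int f * e) * (\<rho> - 1)"
  have \<mu>0K: "\<mu>0 \<in> qf_K d" unfolding \<mu>0_def using \<rho>K by (intro K_add K_mult K_diff K_of_int) auto
  define KK :: nat where "KK = nat (ceiling (\<bar>\<mu>0\<bar> + \<bar>qf_conj d \<mu>0\<bar>)) + 1"
  define M :: int where "M = int f * int n2 * int KK"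
  define \<mu> where "\<mu> = \<mu>0 + of_int M"
  have KKbig: "of_nat KK > \<bar>\<mu>0\<bar> + \<bar>qf_conj d \<mu>0\<bar>" unfolding KK_def by linarith
  have MKK: "of_int M \<ge> (of_nat KK :: real)"
  proof -
    have "f * n2 \<ge> 1" using f1 n2pos by (simp add: Suc_le_eq)
    then have "int f * int n2 \<ge> 1" by (metis of_nat_1 of_nat_le_iff of_nat_mult)
    then have "int f * int n2 * int KK \<ge> 1 * int KK" by (intro mult_right_mono) auto
    then show ?thesis unfolding M_def by linarith
  qed
  have \<mu>K: "\<mu> \<in> qf_K d" unfolding \<mu>_def using \<mu>0K K_add K_of_int by blast
  have \<mu>pos: "\<mu> > 0" unfolding \<mu>_def using KKbig MKK by linarith
  have "qf_conj d \<mu> = qf_conj d \<mu>0 + of_int M" unfolding \<mu>_def using conj_add_int[OF \<mu>0K] .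
  then have \<mu>cpos: "qf_conj d \<mu> > 0" using KKbig MKK by linarith
  have \<mu>nz: "\<mu> \<noteq> 0" using \<mu>pos by simp
  define V where "V s = of_int e * (\<rho> * s - s) + of_int (int n2 * int KK) * s" for s
  have Vq: "\<And>s. s \<in> b \<Longrightarrow> V s \<in> Oq"
  proof -
    fix s assume s: "s \<in> b"
    have sq: "s \<in> Oq" using s bsub by blast
    show "V s \<in> Oq" unfolding V_def
      using ord_add[OF ord_mult[OF ord_int ord_diff[OF \<rho>s[OF s] sq]] ord_mult[OF ord_int sq]] .
  qed
  have \<mu>s: "\<And>s. \<mu> * s = s + of_nat f * V s"
    unfolding \<mu>_def \<mu>0_def V_def M_def by (simp add: algebra_simps)
  define B where "B = lat_scale \<mu> b"
  have Bmem: "\<And>s. s \<in> b \<Longrightarrow> \<mu> * s \<in> B" unfolding B_def lat_scale_def by blast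
  have Bcases: "\<And>w. w \<in> B \<Longrightarrow> \<exists>s\<in>b. w = \<mu> * s" unfolding B_def lat_scale_def by blast
  have Bsub: "B \<subseteq> Oq"
  proof
    fix w assume "w \<in> B"
    then obtain s where s: "s \<in> b" "w = \<mu> * s" using Bcases by blast
    have "s + of_nat f * V s \<in> Oq" using ord_add[OF _ ord_mult[OF ord_nat Vq[OF s(1)]]] s(1) bsub by blast
    then show "w \<in> Oq" using s(2) \<mu>s by simp
  qed
  have sgB: "subgrp B" unfolding subgrp_def
  proof (intro conjI ballI)
    have "\<mu> * 0 \<in> B" using Bmem[OF b0] .
    then show "0 \<in> B" by simp
  next
    fix w w' assume "w \<in> B" "w' \<in> B"
    then obtain s s' where "s \<in> b" "w = \<mu> * s" "s' \<in> b" "w' = \<mu> * s'" using Bcases by blast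
    moreover have "s + s' \<in> b" using badd calculation by blast
    ultimately show "w + w' \<in> B" using Bmem[of "s + s'"] by (simp add: distrib_left)
  next
    fix w assume "w \<in> B"
    then obtain s where "s \<in> b" "w = \<mu> * s" using Bcases by blast
    moreover have "- s \<in> b" using bneg calculation by blast
    ultimately show "- w \<in> B" using Bmem[of "- s"] by simp
  qed
  have stB: "\<And>r w. r \<in> Oq \<Longrightarrow> w \<in> B \<Longrightarrow> r * w \<in> B"
  proof -
    fix r w assume r: "r \<in> Oq" and "w \<in> B"
    then obtain s where s: "s \<in> b" "w = \<mu> * s" using Bcases by blast
    have "\<mu> * (r * s) \<in> B" using Bmem stb[OF r s(1)] by blast
    then show "r * w \<in> B" using s(2) by (simp add: algebra_simps)
  qed
  have stabB: "stab (n*m) B" unfolding stab_def using stB by blast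
  have Bz: "\<mu> * z \<in> B" using Bmem z by blast
  have Bnz: "\<mu> * z \<noteq> 0" using z \<mu>nz by simp
  have cpf: "cp (n*m) B (int f)"
  proof -
    have "1 = \<mu> * x0 + of_int (int f) * (y0 - V x0)" using x0(3) \<mu>s[of x0] by (simp add: algebra_simps)
    moreover have "y0 - V x0 \<in> Oq" using ord_diff[OF x0(2) Vq[OF x0(1)]] .
    ultimately show ?thesis unfolding cp_def using Bmem[OF x0(1)] by blast
  qed
  have cpn2: "cp (n*m) B (int n2)"
  proof -
    have "coprime (int f * e) (int n2)" using bezout_coprime[of 1 "int f * e" h "int n2"] eh by (simp add: algebra_simps)
    moreover have "coprime Q (int n2)" using xy Q_def by simp
    ultimately have "coprime (int f * e * Q) (int n2)" by simp
    then obtain u v where uv: "u * (int f * e * Q) + v * int n2 = 1" using coprime_bezout by blast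
    define G where "G = of_int h * \<beta> + of_int (int f * int KK) * \<beta>"
    have "\<mu> * \<beta> = of_int (int f * e * Q) + of_int (int n2) * G"
    proof -
      have "\<mu> * \<beta> = \<beta> + of_int (int f * e) * (of_int Q - \<beta>) + of_int M * \<beta>"
        unfolding \<mu>_def \<mu>0_def using \<rho>\<beta> by (simp add: algebra_simps)
      also have "\<dots> = of_int (int f * e * Q) + (1 - of_int (e * int f)) * \<beta> + of_int M * \<beta>"
        by (simp add: algebra_simps)
      also have "(1 - of_int (e * int f)) = (of_int (h * int n2) :: real)" using eh
        by (metis add_diff_cancel_left' of_int_1 of_int_add)
      finally show ?thesis unfolding G_def M_def by (simp add: algebra_simps)
    qed
    then have "1 = of_int u * (\<mu> * \<beta>) + of_int (int n2) * (of_int v - of_int u * G)"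
    proof -
      assume h1: "\<mu> * \<beta> = of_int (int f * e * Q) + of_int (int n2) * G"
      have "(1::real) = of_int (u * (int f * e * Q) + v * int n2)" using uv by simp
      also have "\<dots> = of_int u * (of_int (int f * e * Q) + of_int (int n2) * G) + of_int (int n2) * (of_int v - of_int u * G)"
        by (simp add: algebra_simps)
      finally show ?thesis unfolding h1 .
    qed
    moreover have "of_int u * (\<mu> * \<beta>) \<in> B" using stB[OF ord_int Bmem[OF \<beta>b]] .
    moreover have "of_int v - of_int u * G \<in> Oq" unfolding G_def using \<beta>b bsub
      by (intro ord_diff ord_mult ord_add ord_int) auto
    ultimately show ?thesis unfolding cp_def by blast
  qed
  have cpn1: "cp (n*m) B (int n1)"
  proof -
    have "cp (n*m) B (int f ^ kk)" using cp_pow[OF Bsub sgB stabB cpf] .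
    moreover have "int n1 dvd int f ^ kk" using nsplit(3) by (simp add: of_nat_power[symmetric] del: of_nat_power)
    ultimately show ?thesis by (rule cp_dvd)
  qed
  have "cp (n*m) B (int n1 * int n2)" using cp_mult[OF Bsub sgB stabB cpn1 cpn2] .
  then have "cp (n*m) B (int n)" using nsplit(1) by simp
  then have "cp (n*m) B (int n * int f)" using cp_mult[OF Bsub sgB stabB _ cpf] by blast
  then have "cp (n*m) B (int (n*f))" by simp
  then obtain x1 y1 where x1: "x1 \<in> B" "y1 \<in> Oq" "1 = x1 + of_int (int (n*f)) * y1" unfolding cp_def by blast
  have x1e: "1 = x1 + of_nat n * (of_nat f * y1)" using x1(3) by (simp add: mult.assoc)
  have fy1: "of_nat f * y1 \<in> Ok" using ord_mult[OF ord_nat x1(2)] Oq_sub by blast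
  have B0: "0 \<in> B" and Badd: "\<And>u v. u \<in> B \<Longrightarrow> v \<in> B \<Longrightarrow> u + v \<in> B"
    and Bneg: "\<And>u. u \<in> B \<Longrightarrow> - u \<in> B" using sgB unfolding subgrp_def by auto
  define aa where "aa = lat_mult B Ok"
  have Baa: "\<And>w. w \<in> B \<Longrightarrow> w \<in> aa"
  proof -
    fix w assume "w \<in> B"
    then have "w * 1 \<in> aa" unfolding aa_def using LM1 ord_1 by blast
    then show "w \<in> aa" by simp
  qed
  have aasub: "aa \<subseteq> Ok" unfolding aa_def
  proof (rule LMsub)
    show "0 \<in> Ok" by simp
    show "\<And>x y. x \<in> Ok \<Longrightarrow> y \<in> Ok \<Longrightarrow> x + y \<in> Ok" by (rule ord_add)
    show "\<And>x y. x \<in> B \<Longrightarrow> y \<in> Ok \<Longrightarrow> x * y \<in> Ok" using Bsub Oq_sub ord_mult by blast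
  qed
  have staa: "\<And>r w. r \<in> Ok \<Longrightarrow> w \<in> aa \<Longrightarrow> r * w \<in> aa"
  proof -
    fix r w assume r: "r \<in> Ok" and w: "w \<in> aa"
    have "1 * r * w \<in> lat_mult B Ok" using w unfolding aa_def
      by (rule LMmap) (use ord_mult[OF r] in auto)
    then show "r * w \<in> aa" unfolding aa_def by simp
  qed
  have sgaa: "subgrp aa" unfolding subgrp_def
  proof (intro conjI ballI)
    show "0 \<in> aa" unfolding aa_def by (rule LM0)
    show "\<And>x y. x \<in> aa \<Longrightarrow> y \<in> aa \<Longrightarrow> x + y \<in> aa" unfolding aa_def by (rule LMadd)
    fix x assume "x \<in> aa"
    then have "(-1) * 1 * x \<in> lat_mult B Ok" unfolding aa_def
      by (rule LMmap) (use Bneg in auto)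
    then show "- x \<in> aa" unfolding aa_def by simp
  qed
  have naa: "\<And>w. w \<in> aa \<Longrightarrow> of_nat n * w \<in> B"
  proof -
    have "aa \<subseteq> {w. of_nat n * w \<in> B}" unfolding aa_def
    proof (rule LMsub)
      show "0 \<in> {w. of_nat n * w \<in> B}" using B0 by simp
      show "\<And>x y. x \<in> {w. of_nat n * w \<in> B} \<Longrightarrow> y \<in> {w. of_nat n * w \<in> B} \<Longrightarrow> x + y \<in> {w. of_nat n * w \<in> B}"
        using Badd by (simp add: distrib_left)
      fix x y assume x: "x \<in> B" and y: "y \<in> Ok"
      have "of_nat n * y \<in> Oq" using ord_scale[OF y] .
      then have "(of_nat n * y) * x \<in> B" using stB x by blast
      then show "x * y \<in> {w. of_nat n * w \<in> B}" by (simp add: algebra_simps)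
    qed
    then show "\<And>w. w \<in> aa \<Longrightarrow> of_nat n * w \<in> B" by blast
  qed
  have lataa: "is_lattice d aa"
  proof (rule ideal_lattice[OF nm_pos(2) aasub sgaa])
    show "stab m aa" unfolding stab_def using staa by blast
    show "\<mu> * z \<in> aa" using Baa[OF Bz] .
    show "\<mu> * z \<noteq> 0" by (rule Bnz)
  qed
  have Endaa: "lat_End d aa = Ok"
  proof
    show "Ok \<subseteq> lat_End d aa" unfolding lat_End_def using ord_K staa by blast
  next
    show "lat_End d aa \<subseteq> Ok"
    proof
      fix c assume "c \<in> lat_End d aa"
      then have cK: "c \<in> qf_K d" and ca: "\<And>w. w \<in> aa \<Longrightarrow> c * w \<in> aa" unfolding lat_End_def by auto
      have "of_nat n * c \<in> lat_End d b" unfolding lat_End_def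
      proof (intro CollectI conjI ballI)
        show "of_nat n * c \<in> qf_K d" using cK K_mult K_of_nat by blast
        fix s assume s: "s \<in> b"
        have "c * (\<mu> * s) \<in> aa" using ca Baa Bmem s by blast
        then have "of_nat n * (c * (\<mu> * s)) \<in> B" by (rule naa)
        then obtain s' where s': "s' \<in> b" "of_nat n * (c * (\<mu> * s)) = \<mu> * s'" using Bcases by blast
        have "\<mu> * (of_nat n * c * s) = \<mu> * s'" using s'(2) by (simp add: algebra_simps)
        then have "of_nat n * c * s = s'" using \<mu>nz by simp
        then show "of_nat n * c * s \<in> b" using s'(1) by simp
      qed
      then have nc: "of_nat n * c \<in> Ok" using Endb Oq_sub by blast
      have ce: "c = c * x1 + (of_nat n * c) * (of_nat f * y1)"
      proof -
        have "c * (x1 + of_nat n * (of_nat f * y1)) = c" unfolding x1e[symmetric] by simp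
        moreover have "c * (x1 + of_nat n * (of_nat f * y1)) = c * x1 + (of_nat n * c) * (of_nat f * y1)"
          by (simp add: algebra_simps)
        ultimately show ?thesis by linarith
      qed
      have "c * x1 \<in> Ok" using ca[OF Baa[OF x1(1)]] aasub by blast
      moreover have "(of_nat n * c) * (of_nat f * y1) \<in> Ok" using ord_mult[OF nc fy1] .
      ultimately have "c * x1 + (of_nat n * c) * (of_nat f * y1) \<in> Ok" by (rule ord_add)
      then show "c \<in> Ok" using ce by simp
    qed
  qed
  have sumaa: "lat_sum aa (lat_scale (of_nat (n * f)) Ok) = Ok"
  proof
    show "lat_sum aa (lat_scale (of_nat (n * f)) Ok) \<subseteq> Ok"
    proof
      fix v assume "v \<in> lat_sum aa (lat_scale (of_nat (n * f)) Ok)"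
      then obtain p q where pq: "p \<in> aa" "q \<in> Ok" "v = p + of_nat (n*f) * q"
        unfolding lat_sum_def lat_scale_def by blast
      have "p \<in> Ok" using pq(1) aasub by blast
      then show "v \<in> Ok" using pq ord_add ord_mult ord_nat by metis
    qed
  next
    show "Ok \<subseteq> lat_sum aa (lat_scale (of_nat (n * f)) Ok)"
    proof
      fix v assume v: "v \<in> Ok"
      have ve: "v = x1 * v + of_nat (n*f) * (y1 * v)"
      proof -
        have "(x1 + of_nat n * (of_nat f * y1)) * v = v" unfolding x1e[symmetric] by simp
        moreover have "(x1 + of_nat n * (of_nat f * y1)) * v = x1 * v + of_nat (n*f) * (y1 * v)"
          by (simp add: algebra_simps)
        ultimately show ?thesis by linarith
      qed
      have "x1 * v \<in> aa" unfolding aa_def using LM1[OF x1(1) v] .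
      moreover have "y1 * v \<in> Ok" using ord_mult[OF _ v] x1(2) Oq_sub by blast
      ultimately show "v \<in> lat_sum aa (lat_scale (of_nat (n * f)) Ok)"
        unfolding lat_sum_def lat_scale_def using ve by blast
    qed
  qed
  have aaI: "aa \<in> I_ord d Ok (lat_scale (of_nat (n * f)) Ok)"
    unfolding I_ord_def is_invertible_ideal_def is_ideal_def
    using lataa staa Endaa aasub sumaa by blast
  have aaB: "aa \<inter> Oq = B"
  proof
    show "B \<subseteq> aa \<inter> Oq" using Baa Bsub by blast
  next
    show "aa \<inter> Oq \<subseteq> B"
    proof
      fix w assume w: "w \<in> aa \<inter> Oq"
      have we: "w = w * x1 + of_nat n * ((of_nat f * y1) * w)"
      proof -
        have "w * (x1 + of_nat n * (of_nat f * y1)) = w" unfolding x1e[symmetric] by simp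
        moreover have "w * (x1 + of_nat n * (of_nat f * y1)) = w * x1 + of_nat n * ((of_nat f * y1) * w)"
          by (simp add: algebra_simps)
        ultimately show ?thesis by linarith
      qed
      have wq: "w \<in> Oq" and wa: "w \<in> aa" using w by auto
      have "w * x1 \<in> B" using stB[OF wq x1(1)] .
      moreover have "of_nat n * ((of_nat f * y1) * w) \<in> B" using naa[OF staa[OF fy1 wa]] .
      ultimately have "w * x1 + of_nat n * ((of_nat f * y1) * w) \<in> B" by (rule Badd)
      then show "w \<in> B" using we by simp
    qed
  qed
  have EndB: "lat_End d B = Oq" using part1(1)[OF aaI] aaB unfolding is_invertible_ideal_def by simp
  define c where "c = inverse \<mu>"
  define uu where "uu = (c - 1) / of_nat f"
  have fnz: "(of_nat f :: real) \<noteq> 0" using f1 by simp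
  have cu: "c = of_nat f * uu + 1" unfolding uu_def using fnz by simp
  have uuK: "uu \<in> qf_K d" unfolding uu_def c_def using \<mu>K
    by (intro K_divide K_diff K_inverse K_of_nat) auto
  have uuinv: "uu \<in> lat_inv d B" unfolding lat_inv_def EndB
  proof (intro CollectI conjI ballI)
    show "uu \<in> qf_K d" by (rule uuK)
    fix w assume "w \<in> B"
    then obtain s where s: "s \<in> b" "w = \<mu> * s" using Bcases by blast
    have "of_nat f * (uu * w) = (c - 1) * (\<mu> * s)" unfolding uu_def s(2) using fnz by simp
    also have "\<dots> = s - \<mu> * s" unfolding c_def using \<mu>nz by (simp add: algebra_simps)
    also have "\<dots> = of_nat f * (- V s)" using \<mu>s[of s] by simp
    finally have "of_nat f * (uu * w) = of_nat f * (- V s)" .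
    then have "uu * w = - V s" using fnz mult_left_cancel by blast
    then show "uu * w \<in> Oq" using Vq[OF s(1)] ord_minus by simp
  qed
  have tp: "totally_positive d c" unfolding totally_positive_def c_def
    using \<mu>pos \<mu>cpos conj_inverse[OF \<mu>K] by simp
  have scale: "lat_scale c B = b"
  proof -
    have "lat_scale c B = (\<lambda>s. c * (\<mu> * s)) ` b" unfolding lat_scale_def B_def image_image ..
    also have "\<dots> = (\<lambda>s. s) ` b" unfolding c_def using \<mu>nz by (simp add: mult.assoc[symmetric])
    finally show ?thesis by simp
  qed
  have "lat_equiv d f (aa \<inter> Oq) b" unfolding aaB lat_equiv_def using cu uuinv tp scale by blast
  then show ?thesis using aaI by blast
qed

end

theorem proposition2p1:
  fixes d :: int and n f m :: nat
  assumes "d > 1" and "squarefree d"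
    and "n \<ge> 1" and "f \<ge> 1" and "m \<ge> 1"
  defines "Ok \<equiv> qf_order d m" and "Oq \<equiv> qf_order d (n * m)"
  shows "(\<forall>a \<in> I_ord d Ok (lat_scale (of_nat (n * f)) Ok).
            is_invertible_ideal d Oq (a \<inter> Oq)
          \<and> a \<inter> Oq \<in> I_ord d Oq (lat_scale (of_nat f) Oq))
    \<and> (\<forall>a \<in> I_ord d Ok (lat_scale (of_nat (n * f)) Ok).
         \<forall>a' \<in> I_ord d Ok (lat_scale (of_nat (n * f)) Ok).
            lat_mult a a' \<inter> Oq = lat_mult (a \<inter> Oq) (a' \<inter> Oq))
    \<and> (\<forall>a \<in> I_ord d Ok (lat_scale (of_nat (n * f)) Ok).
         \<forall>a' \<in> I_ord d Ok (lat_scale (of_nat (n * f)) Ok).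
            lat_equiv d (n * f) a a' \<longrightarrow> lat_equiv d f (a \<inter> Oq) (a' \<inter> Oq))
    \<and> (\<forall>b \<in> I_ord d Oq (lat_scale (of_nat f) Oq).
         \<exists>a \<in> I_ord d Ok (lat_scale (of_nat (n * f)) Ok). lat_equiv d f (a \<inter> Oq) b)"
proof -
  interpret qf2 d n f m using assms by unfold_locales auto
  show ?thesis unfolding Ok_def Oq_def using part1 part_mult part_equiv part_surj by blast
qed

end
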